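(* Let $A$ be a Noetherian commutative ring with identity, let $A[\mathbf{x}]=A[x_1,\ldots,x_n]$ be equipped with a monomial order, let $I\subset A[\mathbf{x}]$ be an ideal, let $q\subset A$ be an isolated primary component of $I\cap A$ (i.e. a primary component whose associated prime is a minimal prime of $I\cap A$), and let $p\subset A$ be its associated minimal prime. Define $B=A_p/q_p$. Then $$\mathrm{in}(I)\,B[\mathbf{x}]=\mathrm{in}(I\,B[\mathbf{x}]).$$
   Context: A monomial order $>$ is a total order on monomials such that $\mathbf{x}^E>\mathbf{x}^F$ implies $\mathbf{x}^G\mathbf{x}^E>\mathbf{x}^G\mathbf{x}^F$, and $x_i>1$ for each $i$; the same order is used over $B$. $\mathrm{in}(f)$ is the greatest term $c\,\mathbf{x}^E$ ($c\neq0$) of a nonzero polynomial $f$; $\mathrm{in}(I)$ is the ideal generated by all $\mathrm{in}(f)$, $f\in I$. $K\,B[\mathbf{x}]$ denotes the ideal of $B[\mathbf{x}]$ generated by the image of $K\subset A[\mathbf{x}]$ under the natural map $A\to B$ applied to coefficients. *)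

theory Defs
  imports "HOL-Algebra.QuotRing" "HOL-Algebra.Ring_Divisibility" "HOL-Library.Function_Algebras"
begin

text \<open>Exponent vectors are functions nat => nat vanishing outside {0..<n};
  a polynomial is a finitely supported coefficient function on them.\<close>

definition monoms :: "nat \<Rightarrow> (nat \<Rightarrow> nat) set" where
  "monoms n = {E. \<forall>i\<ge>n. E i = 0}"

definition mpoly_ring :: "('a, 'm) ring_scheme \<Rightarrow> nat \<Rightarrow> ((nat \<Rightarrow> nat) \<Rightarrow> 'a) ring" where
  "mpoly_ring R n =
     \<lparr> carrier = {f. (\<forall>E. f E \<in> carrier R) \<and> (\<forall>E. E \<notin> monoms n \<longrightarrow> f E = \<zero>\<^bsub>R\<^esub>)
                     \<and> finite {E. f E \<noteq> \<zero>\<^bsub>R\<^esub>}},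
       mult = (\<lambda>f g E. if E \<in> monoms n
                               then finsum R (\<lambda>F. f F \<otimes>\<^bsub>R\<^esub> g (E - F)) {F. F \<le> E}
                               else \<zero>\<^bsub>R\<^esub>),
       one = (\<lambda>E. if E = 0 then \<one>\<^bsub>R\<^esub> else \<zero>\<^bsub>R\<^esub>),
       zero = (\<lambda>E. \<zero>\<^bsub>R\<^esub>),
       add = (\<lambda>f g E. f E \<oplus>\<^bsub>R\<^esub> g E) \<rparr>"

definition mpoly_const :: "('a, 'm) ring_scheme \<Rightarrow> 'a \<Rightarrow> (nat \<Rightarrow> nat) \<Rightarrow> 'a" where
  "mpoly_const R a = (\<lambda>E. if E = 0 then a else \<zero>\<^bsub>R\<^esub>)"

text \<open>Contraction I \<inter> A of an ideal of A[x] to A.\<close>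
definition contract_const :: "('a, 'm) ring_scheme \<Rightarrow> ((nat \<Rightarrow> nat) \<Rightarrow> 'a) set \<Rightarrow> 'a set" where
  "contract_const R I = {a \<in> carrier R. mpoly_const R a \<in> I}"

text \<open>gt E F means x^E > x^F.\<close>
definition monomial_order :: "nat \<Rightarrow> ((nat \<Rightarrow> nat) \<Rightarrow> (nat \<Rightarrow> nat) \<Rightarrow> bool) \<Rightarrow> bool" where
  "monomial_order n gt \<longleftrightarrow>
     (\<forall>E\<in>monoms n. \<not> gt E E) \<and>
     (\<forall>E\<in>monoms n. \<forall>F\<in>monoms n. \<forall>G\<in>monoms n. gt E F \<longrightarrow> gt F G \<longrightarrow> gt E G) \<and>
     (\<forall>E\<in>monoms n. \<forall>F\<in>monoms n. E \<noteq> F \<longrightarrow> gt E F \<or> gt F E) \<and>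
     (\<forall>E\<in>monoms n. \<forall>F\<in>monoms n. \<forall>G\<in>monoms n. gt E F \<longrightarrow> gt (G + E) (G + F)) \<and>
     (\<forall>i<n. gt (\<lambda>j. if j = i then 1 else 0) 0)"

definition lead_monom :: "('a, 'm) ring_scheme \<Rightarrow> ((nat \<Rightarrow> nat) \<Rightarrow> (nat \<Rightarrow> nat) \<Rightarrow> bool)
    \<Rightarrow> ((nat \<Rightarrow> nat) \<Rightarrow> 'a) \<Rightarrow> nat \<Rightarrow> nat" where
  "lead_monom R gt f = (THE E. f E \<noteq> \<zero>\<^bsub>R\<^esub> \<and> (\<forall>F. f F \<noteq> \<zero>\<^bsub>R\<^esub> \<and> F \<noteq> E \<longrightarrow> gt E F))"

definition init_term :: "('a, 'm) ring_scheme \<Rightarrow> ((nat \<Rightarrow> nat) \<Rightarrow> (nat \<Rightarrow> nat) \<Rightarrow> bool)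
    \<Rightarrow> ((nat \<Rightarrow> nat) \<Rightarrow> 'a) \<Rightarrow> (nat \<Rightarrow> nat) \<Rightarrow> 'a" where
  "init_term R gt f = (\<lambda>F. if F = lead_monom R gt f then f F else \<zero>\<^bsub>R\<^esub>)"

definition init_ideal :: "('a, 'm) ring_scheme \<Rightarrow> nat \<Rightarrow> ((nat \<Rightarrow> nat) \<Rightarrow> (nat \<Rightarrow> nat) \<Rightarrow> bool)
    \<Rightarrow> ((nat \<Rightarrow> nat) \<Rightarrow> 'a) set \<Rightarrow> ((nat \<Rightarrow> nat) \<Rightarrow> 'a) set" where
  "init_ideal R n gt I =
     genideal (mpoly_ring R n) {init_term R gt f | f. f \<in> I \<and> f \<noteq> \<zero>\<^bsub>mpoly_ring R n\<^esub>}"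

definition primary_ideal :: "('a, 'm) ring_scheme \<Rightarrow> 'a set \<Rightarrow> bool" where
  "primary_ideal R q \<longleftrightarrow> ideal q R \<and> q \<noteq> carrier R \<and>
     (\<forall>a\<in>carrier R. \<forall>b\<in>carrier R. a \<otimes>\<^bsub>R\<^esub> b \<in> q \<longrightarrow> a \<in> q \<or> (\<exists>k::nat. b [^]\<^bsub>R\<^esub> k \<in> q))"

definition radical :: "('a, 'm) ring_scheme \<Rightarrow> 'a set \<Rightarrow> 'a set" where
  "radical R J = {a \<in> carrier R. \<exists>k::nat. a [^]\<^bsub>R\<^esub> k \<in> J}"

definition minimal_prime_of :: "('a, 'm) ring_scheme \<Rightarrow> 'a set \<Rightarrow> 'a set \<Rightarrow> bool" where
  "minimal_prime_of R p J \<longleftrightarrow> primeideal p R \<and> J \<subseteq> p \<and>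
     (\<forall>p'. primeideal p' R \<and> J \<subseteq> p' \<and> p' \<subseteq> p \<longrightarrow> p' = p)"

definition minimal_primary_decomposition :: "('a, 'm) ring_scheme \<Rightarrow> 'a set set \<Rightarrow> 'a set \<Rightarrow> bool" where
  "minimal_primary_decomposition R Q J \<longleftrightarrow> finite Q \<and> Q \<noteq> {} \<and>
     (\<forall>q\<in>Q. primary_ideal R q) \<and> \<Inter>Q = J \<and> inj_on (radical R) Q \<and>
     (\<forall>q\<in>Q. \<Inter>(Q - {q}) \<noteq> J)"

definition isolated_primary_component :: "('a, 'm) ring_scheme \<Rightarrow> 'a set \<Rightarrow> 'a set \<Rightarrow> 'a set \<Rightarrow> bool" where
  "isolated_primary_component R J q p \<longleftrightarrow>
     (\<exists>Q. minimal_primary_decomposition R Q J \<and> q \<in> Q) \<and>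
     p = radical R q \<and> minimal_prime_of R p J"

definition loc_rel :: "('a, 'm) ring_scheme \<Rightarrow> 'a set \<Rightarrow> (('a \<times> 'a) \<times> ('a \<times> 'a)) set" where
  "loc_rel R S = {((a, s), (b, t)). a \<in> carrier R \<and> b \<in> carrier R \<and> s \<in> S \<and> t \<in> S \<and>
       (\<exists>u\<in>S. u \<otimes>\<^bsub>R\<^esub> (a \<otimes>\<^bsub>R\<^esub> t \<ominus>\<^bsub>R\<^esub> b \<otimes>\<^bsub>R\<^esub> s) = \<zero>\<^bsub>R\<^esub>)}"

definition frac :: "('a, 'm) ring_scheme \<Rightarrow> 'a set \<Rightarrow> 'a \<Rightarrow> 'a \<Rightarrow> ('a \<times> 'a) set" where
  "frac R S a s = loc_rel R S `` {(a, s)}"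

definition loc_ring :: "('a, 'm) ring_scheme \<Rightarrow> 'a set \<Rightarrow> ('a \<times> 'a) set ring" where
  "loc_ring R S =
     \<lparr> carrier = (carrier R \<times> S) // loc_rel R S,
       mult = (\<lambda>X Y. \<Union>{frac R S (a \<otimes>\<^bsub>R\<^esub> b) (s \<otimes>\<^bsub>R\<^esub> t) | a s b t. (a, s) \<in> X \<and> (b, t) \<in> Y}),
       one = frac R S \<one>\<^bsub>R\<^esub> \<one>\<^bsub>R\<^esub>,
       zero = frac R S \<zero>\<^bsub>R\<^esub> \<one>\<^bsub>R\<^esub>,
       add = (\<lambda>X Y. \<Union>{frac R S (a \<otimes>\<^bsub>R\<^esub> t \<oplus>\<^bsub>R\<^esub> b \<otimes>\<^bsub>R\<^esub> s) (s \<otimes>\<^bsub>R\<^esub> t) | a s b t.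
                                  (a, s) \<in> X \<and> (b, t) \<in> Y}) \<rparr>"

definition loc_at :: "('a, 'm) ring_scheme \<Rightarrow> 'a set \<Rightarrow> ('a \<times> 'a) set ring" where
  "loc_at R p = loc_ring R (carrier R - p)"

definition ext_ideal_loc :: "('a, 'm) ring_scheme \<Rightarrow> 'a set \<Rightarrow> 'a set \<Rightarrow> ('a \<times> 'a) set set" where
  "ext_ideal_loc R p q = {frac R (carrier R - p) a s | a s. a \<in> q \<and> s \<in> carrier R - p}"

definition B_ring :: "('a, 'm) ring_scheme \<Rightarrow> 'a set \<Rightarrow> 'a set \<Rightarrow> ('a \<times> 'a) set set ring" where
  "B_ring R p q = loc_at R p Quot ext_ideal_loc R p q"

definition to_B :: "('a, 'm) ring_scheme \<Rightarrow> 'a set \<Rightarrow> 'a set \<Rightarrow> 'a \<Rightarrow> ('a \<times> 'a) set set" where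
  "to_B R p q a = a_r_coset (loc_at R p) (ext_ideal_loc R p q) (frac R (carrier R - p) a \<one>\<^bsub>R\<^esub>)"

definition map_coeffs :: "('a \<Rightarrow> 'b) \<Rightarrow> ((nat \<Rightarrow> nat) \<Rightarrow> 'a) \<Rightarrow> (nat \<Rightarrow> nat) \<Rightarrow> 'b" where
  "map_coeffs \<phi> f = (\<lambda>E. \<phi> (f E))"

definition ext_to_Bx :: "('a, 'm) ring_scheme \<Rightarrow> nat \<Rightarrow> 'a set \<Rightarrow> 'a set
    \<Rightarrow> ((nat \<Rightarrow> nat) \<Rightarrow> 'a) set \<Rightarrow> ((nat \<Rightarrow> nat) \<Rightarrow> ('a \<times> 'a) set set) set" where
  "ext_to_Bx R n p q K = genideal (mpoly_ring (B_ring R p q) n) (map_coeffs (to_B R p q) ` K)"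

end

theory Submission
  imports Defs
begin

locale mloc = cring +
  fixes S
  assumes S_sub: "S \<subseteq> carrier R" and one_S: "\<one> \<in> S"
    and S_mult: "\<lbrakk>s \<in> S; t \<in> S\<rbrakk> \<Longrightarrow> s \<otimes> t \<in> S"
begin

lemma S_carr: "s \<in> S \<Longrightarrow> s \<in> carrier R" using S_sub by blast

lemma rel_iff: "((a, s), (b, t)) \<in> loc_rel R S \<longleftrightarrow> a \<in> carrier R \<and> b \<in> carrier R \<and> s \<in> S \<and> t \<in> S \<and>
   (\<exists>u\<in>S. u \<otimes> (a \<otimes> t \<ominus> b \<otimes> s) = \<zero>)"
  unfolding loc_rel_def by simp

lemma rel_equiv: "equiv (carrier R \<times> S) (loc_rel R S)"
proof (rule equivI)
  show "loc_rel R S \<subseteq> (carrier R \<times> S) \<times> (carrier R \<times> S)"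
    unfolding loc_rel_def by auto
  show "refl_on (carrier R \<times> S) (loc_rel R S)"
  proof (rule refl_onI)
    fix x assume "x \<in> carrier R \<times> S"
    then obtain a s where x: "x = (a, s)" "a \<in> carrier R" "s \<in> S" by auto
    then have "\<one> \<otimes> (a \<otimes> s \<ominus> a \<otimes> s) = \<zero>" using S_carr by algebra
    then show "(x, x) \<in> loc_rel R S" using x one_S by (auto simp: rel_iff)
  qed
  show "sym (loc_rel R S)"
  proof (rule symI)
    fix x y assume "(x, y) \<in> loc_rel R S"
    then obtain a s b t u where x: "x = (a, s)" "y = (b, t)" "a \<in> carrier R" "s \<in> S"
      "b \<in> carrier R" "t \<in> S" "u \<in> S" "u \<otimes> (a \<otimes> t \<ominus> b \<otimes> s) = \<zero>"
      by (cases x, cases y) (auto simp: rel_iff)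
    have c: "a \<in> carrier R" "b \<in> carrier R" "s \<in> carrier R" "t \<in> carrier R" "u \<in> carrier R"
      using x S_carr by auto
    have "u \<otimes> (b \<otimes> s \<ominus> a \<otimes> t) = \<ominus> (u \<otimes> (a \<otimes> t \<ominus> b \<otimes> s))"
      using c by algebra
    then show "(y, x) \<in> loc_rel R S" using x by (auto simp: rel_iff)
  qed
  show "trans (loc_rel R S)"
  proof (rule transI)
    fix x y z assume "(x, y) \<in> loc_rel R S" "(y, z) \<in> loc_rel R S"
    then obtain a s b t c r u v where x: "x = (a, s)" "y = (b, t)" "z = (c, r)" "a \<in> carrier R" "s \<in> S"
      "b \<in> carrier R" "t \<in> S" "c \<in> carrier R" "r \<in> S" "u \<in> S" "u \<otimes> (a \<otimes> t \<ominus> b \<otimes> s) = \<zero>"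
      "v \<in> S" "v \<otimes> (b \<otimes> r \<ominus> c \<otimes> t) = \<zero>"
      by (cases x, cases y, cases z) (auto simp: rel_iff)
    have c: "a \<in> carrier R" "b \<in> carrier R" "s \<in> carrier R" "t \<in> carrier R" "u \<in> carrier R"
       "c \<in> carrier R" "r \<in> carrier R" "v \<in> carrier R"
      using x S_carr by auto
    have "(t \<otimes> u \<otimes> v) \<otimes> (a \<otimes> r \<ominus> c \<otimes> s) =
       (v \<otimes> r) \<otimes> (u \<otimes> (a \<otimes> t \<ominus> b \<otimes> s)) \<oplus> (u \<otimes> s) \<otimes> (v \<otimes> (b \<otimes> r \<ominus> c \<otimes> t))"
      using c by algebra
    also have "\<dots> = \<zero>" using x c by simp
    moreover have "t \<otimes> u \<otimes> v \<in> S" using x S_mult by auto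
    ultimately show "(x, z) \<in> loc_rel R S" using x by (auto simp: rel_iff)
  qed
qed

lemma frac_eq_iff: "\<lbrakk>a \<in> carrier R; b \<in> carrier R; s \<in> S; t \<in> S\<rbrakk> \<Longrightarrow>
  frac R S a s = frac R S b t \<longleftrightarrow> (\<exists>u\<in>S. u \<otimes> (a \<otimes> t \<ominus> b \<otimes> s) = \<zero>)"
  unfolding frac_def by (subst eq_equiv_class_iff[OF rel_equiv]) (auto simp: rel_iff)

lemma frac_eqI: "\<lbrakk>a \<in> carrier R; b \<in> carrier R; s \<in> S; t \<in> S; a \<otimes> t = b \<otimes> s\<rbrakk> \<Longrightarrow>
  frac R S a s = frac R S b t"
  by (subst frac_eq_iff) (auto intro!: bexI[of _ \<one>] simp: one_S S_carr)

lemma mem_frac: "(b, t) \<in> frac R S a s \<longleftrightarrow> ((a, s), (b, t)) \<in> loc_rel R S"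
  unfolding frac_def by simp

lemma frac_self: "\<lbrakk>a \<in> carrier R; s \<in> S\<rbrakk> \<Longrightarrow> (a, s) \<in> frac R S a s"
  using rel_equiv unfolding mem_frac equiv_def refl_on_def by auto

lemma carrier_L: "X \<in> carrier (loc_ring R S) \<longleftrightarrow> (\<exists>a\<in>carrier R. \<exists>s\<in>S. X = frac R S a s)"
  unfolding loc_ring_def quotient_def frac_def by auto

lemma frac_in: "\<lbrakk>a \<in> carrier R; s \<in> S\<rbrakk> \<Longrightarrow> frac R S a s \<in> carrier (loc_ring R S)"
  unfolding carrier_L by auto

lemma frac_cases:
  assumes "X \<in> carrier (loc_ring R S)"
  obtains a s where "a \<in> carrier R" "s \<in> S" "X = frac R S a s"
  using assms unfolding carrier_L by auto

lemma mult_cong: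
  assumes "((a, s), (a', s')) \<in> loc_rel R S" "((b, t), (b', t')) \<in> loc_rel R S"
  shows "frac R S (a \<otimes> b) (s \<otimes> t) = frac R S (a' \<otimes> b') (s' \<otimes> t')"
proof -
  obtain u v where x: "a \<in> carrier R" "a' \<in> carrier R" "s \<in> S" "s' \<in> S"
    "b \<in> carrier R" "b' \<in> carrier R" "t \<in> S" "t' \<in> S"
    "u \<in> S" "u \<otimes> (a \<otimes> s' \<ominus> a' \<otimes> s) = \<zero>" "v \<in> S" "v \<otimes> (b \<otimes> t' \<ominus> b' \<otimes> t) = \<zero>"
    using assms by (auto simp: rel_iff)
  have c: "a \<in> carrier R" "a' \<in> carrier R" "s \<in> carrier R" "s' \<in> carrier R"
    "b \<in> carrier R" "b' \<in> carrier R" "t \<in> carrier R" "t' \<in> carrier R" "u \<in> carrier R" "v \<in> carrier R"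
    using x S_carr by auto
  have "(u \<otimes> v) \<otimes> ((a \<otimes> b) \<otimes> (s' \<otimes> t') \<ominus> (a' \<otimes> b') \<otimes> (s \<otimes> t)) =
    (v \<otimes> b \<otimes> t') \<otimes> (u \<otimes> (a \<otimes> s' \<ominus> a' \<otimes> s)) \<oplus> (u \<otimes> a' \<otimes> s) \<otimes> (v \<otimes> (b \<otimes> t' \<ominus> b' \<otimes> t))"
    using c by algebra
  also have "\<dots> = \<zero>" using x c by simp
  finally have "(u \<otimes> v) \<otimes> ((a \<otimes> b) \<otimes> (s' \<otimes> t') \<ominus> (a' \<otimes> b') \<otimes> (s \<otimes> t)) = \<zero>" .
  then show ?thesis using x c S_mult by (subst frac_eq_iff) (auto intro!: bexI[of _ "u \<otimes> v"])
qed

lemma add_cong: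
  assumes "((a, s), (a', s')) \<in> loc_rel R S" "((b, t), (b', t')) \<in> loc_rel R S"
  shows "frac R S (a \<otimes> t \<oplus> b \<otimes> s) (s \<otimes> t) = frac R S (a' \<otimes> t' \<oplus> b' \<otimes> s') (s' \<otimes> t')"
proof -
  obtain u v where x: "a \<in> carrier R" "a' \<in> carrier R" "s \<in> S" "s' \<in> S"
    "b \<in> carrier R" "b' \<in> carrier R" "t \<in> S" "t' \<in> S"
    "u \<in> S" "u \<otimes> (a \<otimes> s' \<ominus> a' \<otimes> s) = \<zero>" "v \<in> S" "v \<otimes> (b \<otimes> t' \<ominus> b' \<otimes> t) = \<zero>"
    using assms by (auto simp: rel_iff)
  have c: "a \<in> carrier R" "a' \<in> carrier R" "s \<in> carrier R" "s' \<in> carrier R"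
    "b \<in> carrier R" "b' \<in> carrier R" "t \<in> carrier R" "t' \<in> carrier R" "u \<in> carrier R" "v \<in> carrier R"
    using x S_carr by auto
  have "(u \<otimes> v) \<otimes> ((a \<otimes> t \<oplus> b \<otimes> s) \<otimes> (s' \<otimes> t') \<ominus> (a' \<otimes> t' \<oplus> b' \<otimes> s') \<otimes> (s \<otimes> t)) =
    (t \<otimes> t' \<otimes> v) \<otimes> (u \<otimes> (a \<otimes> s' \<ominus> a' \<otimes> s)) \<oplus> (s \<otimes> s' \<otimes> u) \<otimes> (v \<otimes> (b \<otimes> t' \<ominus> b' \<otimes> t))"
    using c by algebra
  also have "\<dots> = \<zero>" using x c by simp
  finally have "(u \<otimes> v) \<otimes> ((a \<otimes> t \<oplus> b \<otimes> s) \<otimes> (s' \<otimes> t') \<ominus> (a' \<otimes> t' \<oplus> b' \<otimes> s') \<otimes> (s \<otimes> t)) = \<zero>" .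
  then show ?thesis using x c S_mult by (subst frac_eq_iff) (auto intro!: bexI[of _ "u \<otimes> v"])
qed

lemma mult_frac: "\<lbrakk>a \<in> carrier R; b \<in> carrier R; s \<in> S; t \<in> S\<rbrakk> \<Longrightarrow>
  frac R S a s \<otimes>\<^bsub>loc_ring R S\<^esub> frac R S b t = frac R S (a \<otimes> b) (s \<otimes> t)"
proof -
  assume x: "a \<in> carrier R" "b \<in> carrier R" "s \<in> S" "t \<in> S"
  have "{frac R S (a' \<otimes> b') (s' \<otimes> t') | a' s' b' t'. (a', s') \<in> frac R S a s \<and> (b', t') \<in> frac R S b t}
     = {frac R S (a \<otimes> b) (s \<otimes> t)}"
  proof -
    have "\<And>a' s' b' t'. (a', s') \<in> frac R S a s \<Longrightarrow> (b', t') \<in> frac R S b t \<Longrightarrow>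
       frac R S (a' \<otimes> b') (s' \<otimes> t') = frac R S (a \<otimes> b) (s \<otimes> t)"
      unfolding mem_frac by (rule mult_cong[symmetric])
    then show ?thesis using frac_self[of a s] frac_self[of b t] x by blast
  qed
  then show ?thesis unfolding loc_ring_def by simp
qed

lemma add_frac: "\<lbrakk>a \<in> carrier R; b \<in> carrier R; s \<in> S; t \<in> S\<rbrakk> \<Longrightarrow>
  frac R S a s \<oplus>\<^bsub>loc_ring R S\<^esub> frac R S b t = frac R S (a \<otimes> t \<oplus> b \<otimes> s) (s \<otimes> t)"
proof -
  assume x: "a \<in> carrier R" "b \<in> carrier R" "s \<in> S" "t \<in> S"
  have "{frac R S (a' \<otimes> t' \<oplus> b' \<otimes> s') (s' \<otimes> t') | a' s' b' t'. (a', s') \<in> frac R S a s \<and> (b', t') \<in> frac R S b t}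
     = {frac R S (a \<otimes> t \<oplus> b \<otimes> s) (s \<otimes> t)}"
  proof -
    have "\<And>a' s' b' t'. (a', s') \<in> frac R S a s \<Longrightarrow> (b', t') \<in> frac R S b t \<Longrightarrow>
       frac R S (a' \<otimes> t' \<oplus> b' \<otimes> s') (s' \<otimes> t') = frac R S (a \<otimes> t \<oplus> b \<otimes> s) (s \<otimes> t)"
      unfolding mem_frac by (rule add_cong[symmetric])
    then show ?thesis using frac_self[of a s] frac_self[of b t] x by blast
  qed
  then show ?thesis unfolding loc_ring_def by simp
qed

lemma zero_L: "\<zero>\<^bsub>loc_ring R S\<^esub> = frac R S \<zero> \<one>" unfolding loc_ring_def by simp
lemma one_L: "\<one>\<^bsub>loc_ring R S\<^esub> = frac R S \<one> \<one>" unfolding loc_ring_def by simp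

lemma cring_L: "cring (loc_ring R S)"
proof (rule cringI)
  note SC = S_carr S_mult one_S
  show "abelian_group (loc_ring R S)"
  proof (rule abelian_groupI)
    fix X Y assume "X \<in> carrier (loc_ring R S)" "Y \<in> carrier (loc_ring R S)"
    then show "X \<oplus>\<^bsub>loc_ring R S\<^esub> Y \<in> carrier (loc_ring R S)"
      by (elim frac_cases) (simp add: add_frac SC frac_in)
  next
    show "\<zero>\<^bsub>loc_ring R S\<^esub> \<in> carrier (loc_ring R S)" by (simp add: zero_L frac_in one_S)
  next
    fix X Y Z assume "X \<in> carrier (loc_ring R S)" "Y \<in> carrier (loc_ring R S)" "Z \<in> carrier (loc_ring R S)"
    then show "X \<oplus>\<^bsub>loc_ring R S\<^esub> Y \<oplus>\<^bsub>loc_ring R S\<^esub> Z = X \<oplus>\<^bsub>loc_ring R S\<^esub> (Y \<oplus>\<^bsub>loc_ring R S\<^esub> Z)"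
    proof (elim frac_cases)
      fix a s b t c r assume x: "a \<in> carrier R" "s \<in> S" "b \<in> carrier R" "t \<in> S" "c \<in> carrier R" "r \<in> S"
      assume e: "X = frac R S a s" "Y = frac R S b t" "Z = frac R S c r"
      have cc: "s \<in> carrier R" "t \<in> carrier R" "r \<in> carrier R" using x SC by auto
      show ?thesis unfolding e using x SC
        by (simp add: add_frac) (rule frac_eqI, use x cc SC in auto, use x cc in algebra)
    qed
  next
    fix X Y assume "X \<in> carrier (loc_ring R S)" "Y \<in> carrier (loc_ring R S)"
    then show "X \<oplus>\<^bsub>loc_ring R S\<^esub> Y = Y \<oplus>\<^bsub>loc_ring R S\<^esub> X"
    proof (elim frac_cases)
      fix a s b t assume x: "a \<in> carrier R" "s \<in> S" "b \<in> carrier R" "t \<in> S"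
      assume e: "X = frac R S a s" "Y = frac R S b t"
      have cc: "s \<in> carrier R" "t \<in> carrier R" using x SC by auto
      show ?thesis unfolding e using x SC
        by (simp add: add_frac) (rule frac_eqI, use x cc SC in auto, use x cc in algebra)
    qed
  next
    fix X assume "X \<in> carrier (loc_ring R S)"
    then show "\<zero>\<^bsub>loc_ring R S\<^esub> \<oplus>\<^bsub>loc_ring R S\<^esub> X = X"
    proof (elim frac_cases)
      fix a s assume x: "a \<in> carrier R" "s \<in> S"
      assume e: "X = frac R S a s"
      have cc: "s \<in> carrier R" using x SC by auto
      show ?thesis unfolding e zero_L using x SC
        by (simp add: add_frac)
    qed
  next
    fix X assume "X \<in> carrier (loc_ring R S)"
    then show "\<exists>Y\<in>carrier (loc_ring R S). Y \<oplus>\<^bsub>loc_ring R S\<^esub> X = \<zero>\<^bsub>loc_ring R S\<^esub>"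
    proof (elim frac_cases)
      fix a s assume x: "a \<in> carrier R" "s \<in> S"
      assume e: "X = frac R S a s"
      have cc: "s \<in> carrier R" using x SC by auto
      have "frac R S (\<ominus> a) s \<oplus>\<^bsub>loc_ring R S\<^esub> X = \<zero>\<^bsub>loc_ring R S\<^esub>"
        unfolding e zero_L using x SC
        by (simp add: add_frac) (rule frac_eqI, use x cc SC in auto, use x cc in algebra)
      then show ?thesis using x by (intro bexI[of _ "frac R S (\<ominus> a) s"] frac_in) auto
    qed
  qed
next
  note SC = S_carr S_mult one_S
  show "comm_monoid (loc_ring R S)"
  proof (rule comm_monoidI)
    fix X Y assume "X \<in> carrier (loc_ring R S)" "Y \<in> carrier (loc_ring R S)"
    then show "X \<otimes>\<^bsub>loc_ring R S\<^esub> Y \<in> carrier (loc_ring R S)"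
      by (elim frac_cases) (simp add: mult_frac SC frac_in)
  next
    show "\<one>\<^bsub>loc_ring R S\<^esub> \<in> carrier (loc_ring R S)" by (simp add: one_L frac_in one_S)
  next
    fix X Y Z assume "X \<in> carrier (loc_ring R S)" "Y \<in> carrier (loc_ring R S)" "Z \<in> carrier (loc_ring R S)"
    then show "X \<otimes>\<^bsub>loc_ring R S\<^esub> Y \<otimes>\<^bsub>loc_ring R S\<^esub> Z = X \<otimes>\<^bsub>loc_ring R S\<^esub> (Y \<otimes>\<^bsub>loc_ring R S\<^esub> Z)"
    proof (elim frac_cases)
      fix a s b t c r assume x: "a \<in> carrier R" "s \<in> S" "b \<in> carrier R" "t \<in> S" "c \<in> carrier R" "r \<in> S"
      assume e: "X = frac R S a s" "Y = frac R S b t" "Z = frac R S c r"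
      have cc: "s \<in> carrier R" "t \<in> carrier R" "r \<in> carrier R" using x SC by auto
      show ?thesis unfolding e using x SC
        by (simp add: mult_frac) (rule frac_eqI, use x cc SC in auto, use x cc in algebra)
    qed
  next
    fix X assume "X \<in> carrier (loc_ring R S)"
    then show "\<one>\<^bsub>loc_ring R S\<^esub> \<otimes>\<^bsub>loc_ring R S\<^esub> X = X"
    proof (elim frac_cases)
      fix a s assume x: "a \<in> carrier R" "s \<in> S"
      assume e: "X = frac R S a s"
      have cc: "s \<in> carrier R" using x SC by auto
      show ?thesis unfolding e one_L using x SC
        by (simp add: mult_frac)
    qed
  next
    fix X Y assume "X \<in> carrier (loc_ring R S)" "Y \<in> carrier (loc_ring R S)"
    then show "X \<otimes>\<^bsub>loc_ring R S\<^esub> Y = Y \<otimes>\<^bsub>loc_ring R S\<^esub> X"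
    proof (elim frac_cases)
      fix a s b t assume x: "a \<in> carrier R" "s \<in> S" "b \<in> carrier R" "t \<in> S"
      assume e: "X = frac R S a s" "Y = frac R S b t"
      have cc: "s \<in> carrier R" "t \<in> carrier R" using x SC by auto
      show ?thesis unfolding e using x SC
        by (simp add: mult_frac m_comm)
    qed
  qed
next
  note SC = S_carr S_mult one_S
  fix X Y Z assume "X \<in> carrier (loc_ring R S)" "Y \<in> carrier (loc_ring R S)" "Z \<in> carrier (loc_ring R S)"
  then show "(X \<oplus>\<^bsub>loc_ring R S\<^esub> Y) \<otimes>\<^bsub>loc_ring R S\<^esub> Z = X \<otimes>\<^bsub>loc_ring R S\<^esub> Z \<oplus>\<^bsub>loc_ring R S\<^esub> Y \<otimes>\<^bsub>loc_ring R S\<^esub> Z"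
  proof (elim frac_cases)
    fix a s b t c r assume x: "a \<in> carrier R" "s \<in> S" "b \<in> carrier R" "t \<in> S" "c \<in> carrier R" "r \<in> S"
    assume e: "X = frac R S a s" "Y = frac R S b t" "Z = frac R S c r"
    have cc: "s \<in> carrier R" "t \<in> carrier R" "r \<in> carrier R" using x SC by auto
    show ?thesis unfolding e using x SC
      by (simp add: mult_frac add_frac) (rule frac_eqI, use x cc SC in auto, use x cc in algebra)
  qed
qed

end

locale bsetup = cring +
  fixes p q
  assumes prime: "primeideal p R" and q_primary: "primary_ideal R q" and q_rad: "radical R q = p"
begin

lemma q_ideal: "ideal q R" using q_primary unfolding primary_ideal_def by auto

lemma p_ideal: "ideal p R" by (rule primeideal.axioms(1)[OF prime])

lemma p_sub: "p \<subseteq> carrier R" using ideal.Icarr[OF p_ideal] by blast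
lemma q_sub: "q \<subseteq> carrier R" using ideal.Icarr[OF q_ideal] by blast

lemma one_notin_p: "\<one> \<notin> p"
  using primeideal.I_notcarr[OF prime] ideal.one_imp_carrier[OF p_ideal] by blast

lemma p_prime: "\<lbrakk>a \<in> carrier R; b \<in> carrier R; a \<otimes> b \<in> p\<rbrakk> \<Longrightarrow> a \<in> p \<or> b \<in> p"
  using primeideal.I_prime[OF prime] by blast

lemma S_mult': "\<lbrakk>s \<in> carrier R - p; t \<in> carrier R - p\<rbrakk> \<Longrightarrow> s \<otimes> t \<in> carrier R - p"
  using p_prime by auto

sublocale L: mloc R "carrier R - p"
  by unfold_locales (use one_notin_p S_mult' in auto)

lemma q_sub_p: "q \<subseteq> p"
proof
  fix x assume "x \<in> q"
  moreover have xc: "x \<in> carrier R" using \<open>x \<in> q\<close> q_sub by blast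
  moreover have "x [^] (1::nat) = x" using xc by simp
  ultimately have "x \<in> radical R q" unfolding radical_def by (auto intro!: exI[of _ "1::nat"])
  then show "x \<in> p" using q_rad by simp
qed

lemma q_cancel: "\<lbrakk>c \<in> carrier R; s \<in> carrier R - p; c \<otimes> s \<in> q\<rbrakk> \<Longrightarrow> c \<in> q"
  using q_primary q_rad unfolding primary_ideal_def radical_def by blast

abbreviation "SS \<equiv> carrier R - p"
abbreviation "LL \<equiv> loc_ring R SS"
abbreviation "QQ \<equiv> ext_ideal_loc R p q"

lemma mem_QQ: "X \<in> QQ \<longleftrightarrow> (\<exists>a\<in>q. \<exists>s\<in>SS. X = frac R SS a s)"
  unfolding ext_ideal_loc_def by auto

lemma cring_LL: "cring LL" by (rule L.cring_L)

lemma QQ_ideal: "ideal QQ LL"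
proof -
  interpret LL: cring LL by (rule cring_LL)
  have qc: "\<And>a. a \<in> q \<Longrightarrow> a \<in> carrier R" using q_sub by blast
  show ?thesis
  proof (rule idealI)
    show "ring LL" by (rule LL.ring_axioms)
    show "subgroup QQ (add_monoid LL)"
    proof (rule LL.add.subgroupI, goal_cases)
      case 1 show ?case
        using qc by (auto simp: mem_QQ intro!: L.frac_in)
    next
      case 2
      have z: "\<zero> \<in> q" by (rule additive_subgroup.zero_closed[OF ideal.axioms(1)[OF q_ideal]])
      have "frac R SS \<zero> \<one> \<in> QQ" unfolding mem_QQ using z L.one_S
        by (intro bexI[of _ "\<zero>"] bexI[of _ "\<one>"]) auto
      then show ?case by blast
    next
      case (3 X)
      then obtain a s where x: "a \<in> q" "s \<in> SS" "X = frac R SS a s" by (auto simp: mem_QQ)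
      have ac: "a \<in> carrier R" "s \<in> carrier R" "\<ominus> a \<in> carrier R" using x qc by auto
      have ss: "s \<otimes> s \<in> SS" using x L.S_mult by blast
      have "frac R SS (\<ominus> a) s \<oplus>\<^bsub>LL\<^esub> frac R SS a s = frac R SS (\<ominus> a \<otimes> s \<oplus> a \<otimes> s) (s \<otimes> s)"
        using L.add_frac[of "\<ominus> a" a s s] ac x by blast
      also have "\<dots> = frac R SS \<zero> \<one>"
        by (rule L.frac_eqI) (use ac ss L.one_S in \<open>auto\<close>, use ac in algebra)
      finally have e: "frac R SS (\<ominus> a) s \<oplus>\<^bsub>LL\<^esub> X = \<zero>\<^bsub>LL\<^esub>" unfolding x(3) L.zero_L .
      have Xc: "X \<in> carrier LL" "frac R SS (\<ominus> a) s \<in> carrier LL" using x ac L.frac_in by auto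
      have "\<ominus>\<^bsub>LL\<^esub> X = frac R SS (\<ominus> a) s"
        using LL.minus_equality[OF e Xc(1) Xc(2)] .
      moreover have "\<ominus> a \<in> q" using x additive_subgroup.a_inv_closed[OF ideal.axioms(1)[OF q_ideal]] by blast
      ultimately show ?case using x by (auto simp: mem_QQ)
    next
      case (4 X Y)
      then obtain a s b t where x: "a \<in> q" "s \<in> SS" "X = frac R SS a s" "b \<in> q" "t \<in> SS" "Y = frac R SS b t"
        by (auto simp: mem_QQ)
      have "a \<otimes> t \<oplus> b \<otimes> s \<in> q" using x L.S_carr
        additive_subgroup.a_closed[OF ideal.axioms(1)[OF q_ideal]] ideal.I_r_closed[OF q_ideal] by simp
      moreover have st: "s \<otimes> t \<in> SS" using x L.S_mult by blast
      moreover have "X \<oplus>\<^bsub>LL\<^esub> Y = frac R SS (a \<otimes> t \<oplus> b \<otimes> s) (s \<otimes> t)" using x qc L.add_frac by simp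
      ultimately show ?case unfolding mem_QQ by blast
    qed
  next
    fix X Y assume "X \<in> QQ" "Y \<in> carrier LL"
    then obtain a s b t where x: "a \<in> q" "s \<in> SS" "X = frac R SS a s" "b \<in> carrier R" "t \<in> SS" "Y = frac R SS b t"
      by (auto simp: mem_QQ elim: L.frac_cases)
    have "b \<otimes> a \<in> q" "a \<otimes> b \<in> q" using x ideal.I_l_closed[OF q_ideal] ideal.I_r_closed[OF q_ideal] by auto
    moreover have st: "t \<otimes> s \<in> SS" "s \<otimes> t \<in> SS" using x L.S_mult by auto
    moreover have "Y \<otimes>\<^bsub>LL\<^esub> X = frac R SS (b \<otimes> a) (t \<otimes> s)" "X \<otimes>\<^bsub>LL\<^esub> Y = frac R SS (a \<otimes> b) (s \<otimes> t)"
      using x qc L.mult_frac by auto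
    ultimately show "Y \<otimes>\<^bsub>LL\<^esub> X \<in> QQ" "X \<otimes>\<^bsub>LL\<^esub> Y \<in> QQ" unfolding mem_QQ by blast+
  qed
qed

abbreviation "BB \<equiv> B_ring R p q"

lemma BB_def': "BB = LL Quot QQ" unfolding B_ring_def loc_at_def by simp

lemma cring_BB: "cring BB"
  unfolding BB_def' by (rule ideal.quotient_is_cring[OF QQ_ideal cring_LL])

lemma to_B_def': "to_B R p q a = QQ +>\<^bsub>LL\<^esub> frac R SS a \<one>"
  unfolding to_B_def loc_at_def by simp

lemma embed_hom: "(\<lambda>a. frac R SS a \<one>) \<in> ring_hom R LL"
proof (rule ring_hom_memI)
  have o: "\<one> \<in> SS" by (rule L.one_S)
  fix x y assume x: "x \<in> carrier R" "y \<in> carrier R"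
  show "frac R SS x \<one> \<in> carrier LL" using L.frac_in[OF x(1) o] .
  show "frac R SS (x \<otimes> y) \<one> = frac R SS x \<one> \<otimes>\<^bsub>LL\<^esub> frac R SS y \<one>"
    using L.mult_frac[OF x o o] by simp
  show "frac R SS (x \<oplus> y) \<one> = frac R SS x \<one> \<oplus>\<^bsub>LL\<^esub> frac R SS y \<one>"
    using L.add_frac[OF x o o] x by simp
next
  show "frac R SS \<one> \<one> = \<one>\<^bsub>LL\<^esub>" by (simp add: L.one_L)
qed

lemma to_B_hom: "to_B R p q \<in> ring_hom R BB"
proof -
  have "(+>\<^bsub>LL\<^esub>) QQ \<circ> (\<lambda>a. frac R SS a \<one>) \<in> ring_hom R BB"
    unfolding BB_def' by (rule ring_hom_trans[OF embed_hom ideal.rcos_ring_hom[OF QQ_ideal]])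
  moreover have "(+>\<^bsub>LL\<^esub>) QQ \<circ> (\<lambda>a. frac R SS a \<one>) = to_B R p q"
    by (auto simp: to_B_def')
  ultimately show ?thesis by simp
qed

lemma zero_BB: "\<zero>\<^bsub>BB\<^esub> = QQ" unfolding BB_def' FactRing_def by simp

lemma frac_one_in_QQ: "c \<in> carrier R \<Longrightarrow> frac R SS c \<one> \<in> QQ \<longleftrightarrow> c \<in> q"
proof
  assume c: "c \<in> carrier R" "frac R SS c \<one> \<in> QQ"
  then obtain a s where x: "a \<in> q" "s \<in> SS" "frac R SS c \<one> = frac R SS a s" by (auto simp: mem_QQ)
  have ac: "a \<in> carrier R" using x q_sub by blast
  obtain u where u: "u \<in> SS" "u \<otimes> (c \<otimes> s \<ominus> a \<otimes> \<one>) = \<zero>"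
    using x c ac L.one_S L.frac_eq_iff[of c a "\<one>" s] by auto
  have uc: "u \<in> carrier R" "s \<in> carrier R" using u x by auto
  have "c \<otimes> (s \<otimes> u) = u \<otimes> (c \<otimes> s \<ominus> a \<otimes> \<one>) \<oplus> u \<otimes> a" using uc ac c by algebra
  also have "\<dots> = u \<otimes> a" using u uc ac by simp
  finally have "c \<otimes> (s \<otimes> u) \<in> q" using ac uc x ideal.I_l_closed[OF q_ideal] by fastforce
  then show "c \<in> q" using q_cancel[of c "s \<otimes> u"] c x u S_mult' by auto
next
  assume "c \<in> carrier R" "c \<in> q"
  then show "frac R SS c \<one> \<in> QQ" using L.one_S by (auto simp: mem_QQ)
qed

lemma to_B_zero_iff: "c \<in> carrier R \<Longrightarrow> to_B R p q c = \<zero>\<^bsub>BB\<^esub> \<longleftrightarrow> c \<in> q"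
proof -
  assume c: "c \<in> carrier R"
  have fc: "frac R SS c \<one> \<in> carrier LL" using c L.frac_in L.one_S by blast
  interpret LL: cring LL by (rule cring_LL)
  show ?thesis unfolding to_B_def' zero_BB
    using ideal.rcos_const_imp_mem[OF QQ_ideal fc] LL.a_rcos_zero[OF QQ_ideal] frac_one_in_QQ[OF c]
    by blast
qed

lemma to_B_unit: "s \<in> SS \<Longrightarrow> \<exists>v\<in>carrier BB. v \<otimes>\<^bsub>BB\<^esub> to_B R p q s = \<one>\<^bsub>BB\<^esub>"
proof -
  assume s: "s \<in> SS"
  let ?v = "QQ +>\<^bsub>LL\<^esub> frac R SS \<one> s"
  have h: "(+>\<^bsub>LL\<^esub>) QQ \<in> ring_hom LL BB" unfolding BB_def' by (rule ideal.rcos_ring_hom[OF QQ_ideal])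
  have f1: "frac R SS \<one> s \<in> carrier LL" "frac R SS s \<one> \<in> carrier LL" using s L.frac_in L.one_S by auto
  have "?v \<otimes>\<^bsub>BB\<^esub> to_B R p q s = QQ +>\<^bsub>LL\<^esub> (frac R SS \<one> s \<otimes>\<^bsub>LL\<^esub> frac R SS s \<one>)"
    unfolding to_B_def' using ring_hom_mult[OF h f1] by simp
  also have "frac R SS \<one> s \<otimes>\<^bsub>LL\<^esub> frac R SS s \<one> = \<one>\<^bsub>LL\<^esub>"
    using s L.one_S by (simp add: L.mult_frac L.one_L) (rule L.frac_eqI, auto simp: m_comm)
  also have "QQ +>\<^bsub>LL\<^esub> \<one>\<^bsub>LL\<^esub> = \<one>\<^bsub>BB\<^esub>" using ring_hom_one[OF h] by simp
  finally show ?thesis using ring_hom_closed[OF h f1(1)] by blast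
qed

lemma to_B_lift: "y \<in> carrier BB \<Longrightarrow> \<exists>a\<in>carrier R. \<exists>s\<in>SS. to_B R p q s \<otimes>\<^bsub>BB\<^esub> y = to_B R p q a"
proof -
  assume y: "y \<in> carrier BB"
  have h: "(+>\<^bsub>LL\<^esub>) QQ \<in> ring_hom LL BB" unfolding BB_def' by (rule ideal.rcos_ring_hom[OF QQ_ideal])
  obtain X where X: "X \<in> carrier LL" "y = QQ +>\<^bsub>LL\<^esub> X"
    using y unfolding BB_def' FactRing_def A_RCOSETS_def' by auto
  obtain a s where x: "a \<in> carrier R" "s \<in> SS" "X = frac R SS a s" using X(1) by (elim L.frac_cases)
  have f1: "frac R SS s \<one> \<in> carrier LL" using x L.frac_in L.one_S by auto
  have "to_B R p q s \<otimes>\<^bsub>BB\<^esub> y = QQ +>\<^bsub>LL\<^esub> (frac R SS s \<one> \<otimes>\<^bsub>LL\<^esub> X)"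
    unfolding to_B_def' X(2) using ring_hom_mult[OF h f1 X(1)] by simp
  also have "frac R SS s \<one> \<otimes>\<^bsub>LL\<^esub> X = frac R SS a \<one>"
    using x L.one_S by (simp add: L.mult_frac) (rule L.frac_eqI, auto simp: m_comm)
  finally show ?thesis using x unfolding to_B_def' by blast
qed

end

lemma carrier_P: "f \<in> carrier (mpoly_ring R n) \<longleftrightarrow> (\<forall>E. f E \<in> carrier R) \<and>
   (\<forall>E. E \<notin> monoms n \<longrightarrow> f E = \<zero>\<^bsub>R\<^esub>) \<and> finite {E. f E \<noteq> \<zero>\<^bsub>R\<^esub>}"
  unfolding mpoly_ring_def by simp

lemma add_P: "f \<oplus>\<^bsub>mpoly_ring R n\<^esub> g = (\<lambda>E. f E \<oplus>\<^bsub>R\<^esub> g E)" unfolding mpoly_ring_def by simp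
lemma zero_P: "\<zero>\<^bsub>mpoly_ring R n\<^esub> = (\<lambda>E. \<zero>\<^bsub>R\<^esub>)" unfolding mpoly_ring_def by simp
lemma one_P: "\<one>\<^bsub>mpoly_ring R n\<^esub> = (\<lambda>E. if E = 0 then \<one>\<^bsub>R\<^esub> else \<zero>\<^bsub>R\<^esub>)" unfolding mpoly_ring_def by simp
lemma mult_P: "f \<otimes>\<^bsub>mpoly_ring R n\<^esub> g = (\<lambda>E. if E \<in> monoms n
     then finsum R (\<lambda>F. f F \<otimes>\<^bsub>R\<^esub> g (E - F)) {F. F \<le> E} else \<zero>\<^bsub>R\<^esub>)"
  unfolding mpoly_ring_def by simp

lemma zero_monoms: "0 \<in> monoms n" unfolding monoms_def by simp

lemma finite_le: "E \<in> monoms n \<Longrightarrow> finite {F::nat\<Rightarrow>nat. F \<le> E}"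
proof -
  assume E: "E \<in> monoms n"
  have inj: "inj_on (\<lambda>F. restrict F {..<n}) {F. F \<le> E}"
  proof (rule inj_onI)
    fix F G :: "nat \<Rightarrow> nat"
    assume F: "F \<in> {F. F \<le> E}" and G: "G \<in> {F. F \<le> E}" and eq: "restrict F {..<n} = restrict G {..<n}"
    show "F = G"
    proof
      fix i show "F i = G i"
      proof (cases "i < n")
        case True
        have "restrict F {..<n} i = restrict G {..<n} i" using eq by simp
        then show ?thesis using True by simp
      next
        case False
        then have "E i = 0" using E unfolding monoms_def by simp
        then show ?thesis using F G unfolding le_fun_def by (metis le_zero_eq mem_Collect_eq)
      qed
    qed
  qed
  have "(\<lambda>F. restrict F {..<n}) ` {F. F \<le> E} \<subseteq> PiE {..<n} (\<lambda>i. {..E i})"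
    by (intro image_subsetI) (simp add: restrict_PiE_iff le_fun_def)
  then have "finite ((\<lambda>F. restrict F {..<n}) ` {F. F \<le> E})"
    by (rule finite_subset) (auto intro: finite_PiE)
  then show ?thesis using finite_imageD inj by blast
qed

lemma zero_le_fun: "(0::nat\<Rightarrow>nat) \<le> E" by (simp add: le_fun_def)
lemma minus_zero_fun: "(E::nat\<Rightarrow>nat) - 0 = E" by (simp add: fun_eq_iff)

context cring
begin

lemma const_mult:
  assumes c: "c \<in> carrier R" and h: "\<And>E. h E \<in> carrier R" "\<And>E. E \<notin> monoms n \<Longrightarrow> h E = \<zero>"
  shows "mpoly_const R c \<otimes>\<^bsub>mpoly_ring R n\<^esub> h = (\<lambda>E. c \<otimes> h E)"
proof
  fix E show "(mpoly_const R c \<otimes>\<^bsub>mpoly_ring R n\<^esub> h) E = c \<otimes> h E"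
  proof (cases "E \<in> monoms n")
    case True
    have "(\<Oplus>F\<in>{F. F \<le> E}. mpoly_const R c F \<otimes> h (E - F)) = (\<Oplus>F\<in>{F. F \<le> E}. if 0 = F then c \<otimes> h E else \<zero>)"
      by (rule finsum_cong') (auto simp: mpoly_const_def c h minus_zero_fun)
    also have "\<dots> = c \<otimes> h E"
      using finsum_singleton[of 0 "{F. F \<le> E}" "\<lambda>F. c \<otimes> h E"] finite_le[OF True] c h zero_le_fun
      by simp
    finally show ?thesis using True by (simp add: mult_P)
  next
    case False
    then show ?thesis using c h by (simp add: mult_P)
  qed
qed

lemma mult_pt_carrier: "(\<And>E. f E \<in> carrier R) \<Longrightarrow> (\<And>E. g E \<in> carrier R) \<Longrightarrow>
   (f \<otimes>\<^bsub>mpoly_ring R n\<^esub> g) E \<in> carrier R"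
  by (auto simp: mult_P intro!: finsum_closed)

lemma mult_pt_zero: "E \<notin> monoms n \<Longrightarrow> (f \<otimes>\<^bsub>mpoly_ring R n\<^esub> g) E = \<zero>"
  by (simp add: mult_P)

lemma const_mult_left_assoc:
  assumes c: "c \<in> carrier R" and b: "b \<in> carrier (mpoly_ring R n)" and g: "g \<in> carrier (mpoly_ring R n)"
  shows "(mpoly_const R c \<otimes>\<^bsub>mpoly_ring R n\<^esub> b) \<otimes>\<^bsub>mpoly_ring R n\<^esub> g
        = mpoly_const R c \<otimes>\<^bsub>mpoly_ring R n\<^esub> (b \<otimes>\<^bsub>mpoly_ring R n\<^esub> g)"
proof -
  have bc: "\<And>E. b E \<in> carrier R" "\<And>E. E \<notin> monoms n \<Longrightarrow> b E = \<zero>" and gc: "\<And>E. g E \<in> carrier R"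
    using b g by (auto simp: carrier_P)
  have r: "mpoly_const R c \<otimes>\<^bsub>mpoly_ring R n\<^esub> (b \<otimes>\<^bsub>mpoly_ring R n\<^esub> g) = (\<lambda>E. c \<otimes> (b \<otimes>\<^bsub>mpoly_ring R n\<^esub> g) E)"
    by (rule const_mult[OF c]) (auto intro: mult_pt_carrier bc gc mult_pt_zero)
  have "\<forall>E. ((\<lambda>E. c \<otimes> b E) \<otimes>\<^bsub>mpoly_ring R n\<^esub> g) E = c \<otimes> (b \<otimes>\<^bsub>mpoly_ring R n\<^esub> g) E"
  proof
    fix E show "((\<lambda>E. c \<otimes> b E) \<otimes>\<^bsub>mpoly_ring R n\<^esub> g) E = c \<otimes> (b \<otimes>\<^bsub>mpoly_ring R n\<^esub> g) E"
    proof (cases "E \<in> monoms n")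
      case True
      have "(\<Oplus>F\<in>{F. F \<le> E}. (c \<otimes> b F) \<otimes> g (E - F)) = (\<Oplus>F\<in>{F. F \<le> E}. c \<otimes> (b F \<otimes> g (E - F)))"
        by (rule finsum_cong') (auto simp: m_assoc c bc gc)
      also have "\<dots> = c \<otimes> (\<Oplus>F\<in>{F. F \<le> E}. b F \<otimes> g (E - F))"
        by (rule finsum_rdistr[symmetric]) (auto simp: finite_le[OF True] c bc gc)
      finally show ?thesis using True by (simp add: mult_P)
    qed (simp add: mult_P c)
  qed
  moreover have cm: "mpoly_const R c \<otimes>\<^bsub>mpoly_ring R n\<^esub> b = (\<lambda>E. c \<otimes> b E)" by (rule const_mult[OF c bc(1) bc(2)])
  ultimately show ?thesis by (simp add: r cm fun_eq_iff)
qed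

lemma const_mult_right_comm:
  assumes c: "c \<in> carrier R" and b: "b \<in> carrier (mpoly_ring R n)" and g: "g \<in> carrier (mpoly_ring R n)"
  shows "b \<otimes>\<^bsub>mpoly_ring R n\<^esub> (mpoly_const R c \<otimes>\<^bsub>mpoly_ring R n\<^esub> g)
        = mpoly_const R c \<otimes>\<^bsub>mpoly_ring R n\<^esub> (b \<otimes>\<^bsub>mpoly_ring R n\<^esub> g)"
proof -
  have bc: "\<And>E. b E \<in> carrier R" and gc: "\<And>E. g E \<in> carrier R" "\<And>E. E \<notin> monoms n \<Longrightarrow> g E = \<zero>"
    using b g by (auto simp: carrier_P)
  have r: "mpoly_const R c \<otimes>\<^bsub>mpoly_ring R n\<^esub> (b \<otimes>\<^bsub>mpoly_ring R n\<^esub> g) = (\<lambda>E. c \<otimes> (b \<otimes>\<^bsub>mpoly_ring R n\<^esub> g) E)"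
    by (rule const_mult[OF c]) (auto intro: mult_pt_carrier bc gc mult_pt_zero)
  have "\<forall>E. (b \<otimes>\<^bsub>mpoly_ring R n\<^esub> (\<lambda>E. c \<otimes> g E)) E = c \<otimes> (b \<otimes>\<^bsub>mpoly_ring R n\<^esub> g) E"
  proof
    fix E show "(b \<otimes>\<^bsub>mpoly_ring R n\<^esub> (\<lambda>E. c \<otimes> g E)) E = c \<otimes> (b \<otimes>\<^bsub>mpoly_ring R n\<^esub> g) E"
    proof (cases "E \<in> monoms n")
      case True
      have "(\<Oplus>F\<in>{F. F \<le> E}. b F \<otimes> (c \<otimes> g (E - F))) = (\<Oplus>F\<in>{F. F \<le> E}. c \<otimes> (b F \<otimes> g (E - F)))"
        by (rule finsum_cong') (auto simp: m_lcomm c bc gc)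
      also have "\<dots> = c \<otimes> (\<Oplus>F\<in>{F. F \<le> E}. b F \<otimes> g (E - F))"
        by (rule finsum_rdistr[symmetric]) (auto simp: finite_le[OF True] c bc gc)
      finally show ?thesis using True by (simp add: mult_P)
    qed (simp add: mult_P c)
  qed
  moreover have cm: "mpoly_const R c \<otimes>\<^bsub>mpoly_ring R n\<^esub> g = (\<lambda>E. c \<otimes> g E)" by (rule const_mult[OF c gc(1) gc(2)])
  ultimately show ?thesis by (simp add: r cm fun_eq_iff)
qed

lemma const_in_P: "c \<in> carrier R \<Longrightarrow> mpoly_const R c \<in> carrier (mpoly_ring R n)"
proof -
  assume c: "c \<in> carrier R"
  have "{E. mpoly_const R c E \<noteq> \<zero>} \<subseteq> {0}" by (auto simp: mpoly_const_def)
  then show ?thesis using c zero_monoms finite_subset by (auto simp: carrier_P mpoly_const_def)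
qed

lemma neg_P:
  assumes P: "ring (mpoly_ring R n)" and f: "f \<in> carrier (mpoly_ring R n)"
  shows "\<ominus>\<^bsub>mpoly_ring R n\<^esub> f = (\<lambda>E. \<ominus> f E)"
proof -
  interpret P: ring "mpoly_ring R n" by (rule P)
  have fc: "\<And>E. f E \<in> carrier R" "\<And>E. E \<notin> monoms n \<Longrightarrow> f E = \<zero>" "finite {E. f E \<noteq> \<zero>}"
    using f by (auto simp: carrier_P)
  have "{E. \<ominus> f E \<noteq> \<zero>} \<subseteq> {E. f E \<noteq> \<zero>}" using fc by auto
  then have m: "(\<lambda>E. \<ominus> f E) \<in> carrier (mpoly_ring R n)"
    using fc finite_subset by (auto simp: carrier_P)
  have "(\<lambda>E. \<ominus> f E) \<oplus>\<^bsub>mpoly_ring R n\<^esub> f = \<zero>\<^bsub>mpoly_ring R n\<^esub>"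
    using fc by (simp add: add_P zero_P l_neg)
  then show ?thesis using P.minus_equality[OF _ f m] by simp
qed

end

definition mmono :: "('a, 'm) ring_scheme \<Rightarrow> 'a \<Rightarrow> (nat \<Rightarrow> nat) \<Rightarrow> (nat \<Rightarrow> nat) \<Rightarrow> 'a" where
  "mmono R c E = (\<lambda>F. if F = E then c else \<zero>\<^bsub>R\<^esub>)"

context ring_hom_cring
begin

lemma map_carrier: "f \<in> carrier (mpoly_ring R n) \<Longrightarrow> map_coeffs h f \<in> carrier (mpoly_ring S n)"
proof -
  assume f: "f \<in> carrier (mpoly_ring R n)"
  have fc: "\<And>E. f E \<in> carrier R" "\<And>E. E \<notin> monoms n \<Longrightarrow> f E = \<zero>" "finite {E. f E \<noteq> \<zero>}"
    using f by (auto simp: carrier_P)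
  have "{E. h (f E) \<noteq> \<zero>\<^bsub>S\<^esub>} \<subseteq> {E. f E \<noteq> \<zero>}" using fc by auto
  then show ?thesis using fc finite_subset by (auto simp: carrier_P map_coeffs_def)
qed

lemma map_add: "f \<in> carrier (mpoly_ring R n) \<Longrightarrow> g \<in> carrier (mpoly_ring R n) \<Longrightarrow>
  map_coeffs h (f \<oplus>\<^bsub>mpoly_ring R n\<^esub> g) = map_coeffs h f \<oplus>\<^bsub>mpoly_ring S n\<^esub> map_coeffs h g"
  by (auto simp: map_coeffs_def add_P carrier_P)

lemma map_mult: "f \<in> carrier (mpoly_ring R n) \<Longrightarrow> g \<in> carrier (mpoly_ring R n) \<Longrightarrow>
  map_coeffs h (f \<otimes>\<^bsub>mpoly_ring R n\<^esub> g) = map_coeffs h f \<otimes>\<^bsub>mpoly_ring S n\<^esub> map_coeffs h g"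
proof
  fix E
  assume f: "f \<in> carrier (mpoly_ring R n)" and g: "g \<in> carrier (mpoly_ring R n)"
  have fc: "\<And>E. f E \<in> carrier R" and gc: "\<And>E. g E \<in> carrier R" using f g by (auto simp: carrier_P)
  show "map_coeffs h (f \<otimes>\<^bsub>mpoly_ring R n\<^esub> g) E = (map_coeffs h f \<otimes>\<^bsub>mpoly_ring S n\<^esub> map_coeffs h g) E"
  proof (cases "E \<in> monoms n")
    case True
    have "h (\<Oplus>F\<in>{F. F \<le> E}. f F \<otimes> g (E - F)) = (\<Oplus>\<^bsub>S\<^esub>F\<in>{F. F \<le> E}. h (f F \<otimes> g (E - F)))"
      by (subst hom_finsum) (auto simp: fc gc o_def)
    also have "\<dots> = (\<Oplus>\<^bsub>S\<^esub>F\<in>{F. F \<le> E}. h (f F) \<otimes>\<^bsub>S\<^esub> h (g (E - F)))"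
      by (rule S.finsum_cong') (auto simp: fc gc)
    finally show ?thesis using True by (simp add: mult_P map_coeffs_def)
  qed (simp add: mult_P map_coeffs_def)
qed

lemma map_const: "c \<in> carrier R \<Longrightarrow> map_coeffs h (mpoly_const R c) = mpoly_const S (h c)"
  by (auto simp: map_coeffs_def mpoly_const_def)

lemma map_neg_pt: "f \<in> carrier (mpoly_ring R n) \<Longrightarrow> map_coeffs h (\<lambda>E. \<ominus> f E) = (\<lambda>E. \<ominus>\<^bsub>S\<^esub> map_coeffs h f E)"
  by (auto simp: map_coeffs_def carrier_P)

end

lemma mo_irrefl: "monomial_order n gt \<Longrightarrow> E \<in> monoms n \<Longrightarrow> \<not> gt E E"
  unfolding monomial_order_def by blast
lemma mo_trans: "monomial_order n gt \<Longrightarrow> E \<in> monoms n \<Longrightarrow> F \<in> monoms n \<Longrightarrow> G \<in> monoms n \<Longrightarrow>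
  gt E F \<Longrightarrow> gt F G \<Longrightarrow> gt E G"
  unfolding monomial_order_def by blast
lemma mo_total: "monomial_order n gt \<Longrightarrow> E \<in> monoms n \<Longrightarrow> F \<in> monoms n \<Longrightarrow> E \<noteq> F \<Longrightarrow> gt E F \<or> gt F E"
  unfolding monomial_order_def by blast

lemma lm_unique:
  assumes mo: "monomial_order n gt" and sub: "\<And>E. f E \<noteq> \<zero>\<^bsub>R\<^esub> \<Longrightarrow> E \<in> monoms n"
    and fE: "f E \<noteq> \<zero>\<^bsub>R\<^esub>" and mx: "\<And>F. f F \<noteq> \<zero>\<^bsub>R\<^esub> \<Longrightarrow> F \<noteq> E \<Longrightarrow> gt E F"
  shows "lead_monom R gt f = E"
  unfolding lead_monom_def
proof (rule the_equality)
  show "f E \<noteq> \<zero>\<^bsub>R\<^esub> \<and> (\<forall>F. f F \<noteq> \<zero>\<^bsub>R\<^esub> \<and> F \<noteq> E \<longrightarrow> gt E F)" using fE mx by blast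
next
  fix E' assume E': "f E' \<noteq> \<zero>\<^bsub>R\<^esub> \<and> (\<forall>F. f F \<noteq> \<zero>\<^bsub>R\<^esub> \<and> F \<noteq> E' \<longrightarrow> gt E' F)"
  show "E' = E"
  proof (rule ccontr)
    assume ne: "E' \<noteq> E"
    have "gt E E'" using mx E' ne by blast
    moreover have "gt E' E" using E' fE ne by blast
    moreover have m1: "E \<in> monoms n" using sub fE by blast
    moreover have m2: "E' \<in> monoms n" using sub E' by blast
    ultimately have "gt E E" using mo_trans[of n gt E E' E] mo m1 m2 by blast
    then show False using mo_irrefl[of n gt E] mo m1 by blast
  qed
qed

lemma lm_exists:
  assumes mo: "monomial_order n gt"
  shows "finite X \<Longrightarrow> X \<noteq> {} \<Longrightarrow> X \<subseteq> monoms n \<Longrightarrow> \<exists>E\<in>X. \<forall>F\<in>X. F \<noteq> E \<longrightarrow> gt E F"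
proof (induction X rule: finite_ne_induct)
  case (singleton x) then show ?case by blast
next
  case (insert x X)
  have xm: "x \<in> monoms n" and Xm: "X \<subseteq> monoms n" using insert.prems by auto
  obtain E where E: "E \<in> X" "\<forall>F\<in>X. F \<noteq> E \<longrightarrow> gt E F" using insert.IH[OF Xm] by blast
  have xX: "x \<notin> X" using insert.hyps by blast
  show ?case
  proof (cases "gt x E")
    case True
    have EM: "E \<in> monoms n" using Xm E(1) by blast
    have "\<forall>F\<in>insert x X. F \<noteq> x \<longrightarrow> gt x F"
    proof (intro ballI impI)
      fix F assume F: "F \<in> insert x X" "F \<noteq> x"
      then have FX: "F \<in> X" by simp
      have FM: "F \<in> monoms n" using Xm FX by blast
      show "gt x F"
      proof (cases "F = E")
        case True then show ?thesis using \<open>gt x E\<close> by simp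
      next
        case False
        then have "gt E F" using E(2) FX by blast
        then show ?thesis using mo_trans[of n gt x E F] mo xm EM FM \<open>gt x E\<close> by blast
      qed
    qed
    then show ?thesis by (intro bexI[of _ x]) auto
  next
    case False
    have "x \<noteq> E" using xX E by blast
    moreover have EM: "E \<in> monoms n" using Xm E by auto
    ultimately have "gt E x" using mo_total[of n gt x E] mo xm EM False by blast
    then have "\<forall>F\<in>insert x X. F \<noteq> E \<longrightarrow> gt E F" using E(2) by blast
    then show ?thesis using E(1) by (intro bexI[of _ E]) auto
  qed
qed

lemma lm_prop:
  assumes mo: "monomial_order n gt" and f: "f \<in> carrier (mpoly_ring R n)" and nz: "f \<noteq> \<zero>\<^bsub>mpoly_ring R n\<^esub>"
  shows "f (lead_monom R gt f) \<noteq> \<zero>\<^bsub>R\<^esub>" "\<And>F. f F \<noteq> \<zero>\<^bsub>R\<^esub> \<Longrightarrow> F \<noteq> lead_monom R gt f \<Longrightarrow> gt (lead_monom R gt f) F"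
    "lead_monom R gt f \<in> monoms n"
proof -
  let ?X = "{E. f E \<noteq> \<zero>\<^bsub>R\<^esub>}"
  have fin: "finite ?X" and sub: "?X \<subseteq> monoms n" using f by (auto simp: carrier_P)
  have "?X \<noteq> {}" using nz by (auto simp: zero_P)
  then obtain E where E: "E \<in> ?X" "\<forall>F\<in>?X. F \<noteq> E \<longrightarrow> gt E F" using lm_exists[OF mo fin _ sub] by blast
  have "lead_monom R gt f = E"
    by (rule lm_unique[OF mo]) (use sub E in auto)
  then show "f (lead_monom R gt f) \<noteq> \<zero>\<^bsub>R\<^esub>" "\<And>F. f F \<noteq> \<zero>\<^bsub>R\<^esub> \<Longrightarrow> F \<noteq> lead_monom R gt f \<Longrightarrow> gt (lead_monom R gt f) F"
    "lead_monom R gt f \<in> monoms n" using E sub by auto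
qed

lemma lm_supp_eq: "(\<And>E. (f E \<noteq> \<zero>\<^bsub>R\<^esub>) = (g E \<noteq> \<zero>\<^bsub>S\<^esub>)) \<Longrightarrow> lead_monom R gt f = lead_monom S gt g"
  unfolding lead_monom_def by simp

lemma init_term_carrier:
  assumes mo: "monomial_order n gt" and f: "f \<in> carrier (mpoly_ring R n)" and nz: "f \<noteq> \<zero>\<^bsub>mpoly_ring R n\<^esub>"
    and z: "\<zero>\<^bsub>R\<^esub> \<in> carrier R"
  shows "init_term R gt f \<in> carrier (mpoly_ring R n)"
proof -
  have "{F. init_term R gt f F \<noteq> \<zero>\<^bsub>R\<^esub>} \<subseteq> {lead_monom R gt f}" by (auto simp: init_term_def)
  then show ?thesis using f z lm_prop(3)[OF mo f nz] finite_subset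
    by (auto simp: carrier_P init_term_def)
qed

context cring
begin

lemma colon_ideal: "ideal K R \<Longrightarrow> a \<in> carrier R \<Longrightarrow> ideal {x \<in> carrier R. x \<otimes> a \<in> K} R"
proof -
  assume K: "ideal K R" and a: "a \<in> carrier R"
  interpret K: ideal K R by (rule K)
  show ?thesis
  proof (rule idealI)
    show "ring R" by (rule ring_axioms)
    show "subgroup {x \<in> carrier R. x \<otimes> a \<in> K} (add_monoid R)"
    proof (rule add.subgroupI, goal_cases)
      case 1 then show ?case by auto
    next
      case 2 have "\<zero> \<in> {x \<in> carrier R. x \<otimes> a \<in> K}" using a by simp
      then show ?case by blast
    next
      case (3 x) then show ?case using a by (auto simp: l_minus)
    next
      case (4 x y) then show ?case using a by (auto simp: l_distr)
    qed
  next
    fix x y assume "x \<in> {x \<in> carrier R. x \<otimes> a \<in> K}" "y \<in> carrier R"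
    then show "y \<otimes> x \<in> {x \<in> carrier R. x \<otimes> a \<in> K}" "x \<otimes> y \<in> {x \<in> carrier R. x \<otimes> a \<in> K}"
      using a by (auto simp: m_assoc K.I_l_closed) (metis K.I_l_closed m_assoc m_comm m_closed)
  qed
qed

lemma pow_sum_in:
  "ideal K R \<Longrightarrow> a \<in> carrier R \<Longrightarrow> b \<in> carrier R \<Longrightarrow> (k::nat) + l = (m::nat) \<Longrightarrow> a [^] k \<in> K \<Longrightarrow> b [^] l \<in> K
   \<Longrightarrow> (a \<oplus> b) [^] m \<in> K"
proof (induction m arbitrary: k l K)
  case 0
  then have "\<one> \<in> K" by simp
  then have "K = carrier R" using ideal.one_imp_carrier[OF 0(1)] by blast
  then show ?case using 0 by simp
next
  case (Suc m)
  show ?case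
  proof (cases "k = 0 \<or> l = 0")
    case True
    then have "\<one> \<in> K" using Suc by auto
    then have "K = carrier R" using ideal.one_imp_carrier[OF Suc(2)] by blast
    then show ?thesis using Suc by simp
  next
    case False
    then obtain k' l' where kl: "k = Suc k'" "l = Suc l'" by (metis not0_implies_Suc)
    have ab: "a \<oplus> b \<in> carrier R" using Suc by simp
    let ?Ka = "{x \<in> carrier R. x \<otimes> a \<in> K}" and ?Kb = "{x \<in> carrier R. x \<otimes> b \<in> K}"
    have Ka: "ideal ?Ka R" and Kb: "ideal ?Kb R" using colon_ideal Suc by auto
    have h1: "a [^] k' \<in> ?Ka" using Suc kl by simp
    have h2: "b [^] l \<in> ?Ka" using Suc ideal.I_r_closed[OF Suc(2)] by simp
    have m1: "k' + l = m" using Suc kl by simp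
    have r1: "(a \<oplus> b) [^] m \<in> ?Ka" using Suc.IH[OF Ka Suc.prems(2) Suc.prems(3) m1 h1 h2] .
    have h3: "a [^] k \<in> ?Kb" using Suc ideal.I_r_closed[OF Suc(2)] by simp
    have h4: "b [^] l' \<in> ?Kb" using Suc kl by simp
    have m2: "k + l' = m" using Suc kl by simp
    have r2: "(a \<oplus> b) [^] m \<in> ?Kb" using Suc.IH[OF Kb Suc.prems(2) Suc.prems(3) m2 h3 h4] .
    from r1 r2 have "(a \<oplus> b) [^] m \<otimes> a \<in> K" "(a \<oplus> b) [^] m \<otimes> b \<in> K" by auto
    then have "(a \<oplus> b) [^] m \<otimes> a \<oplus> (a \<oplus> b) [^] m \<otimes> b \<in> K"
      using additive_subgroup.a_closed[OF ideal.axioms(1)[OF Suc(2)]] by auto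
    moreover have "(a \<oplus> b) [^] Suc m = (a \<oplus> b) [^] m \<otimes> a \<oplus> (a \<oplus> b) [^] m \<otimes> b"
      using Suc ab by (simp add: r_distr)
    ultimately show ?thesis by simp
  qed
qed

lemma pow_in_prime: "primeideal P R \<Longrightarrow> x \<in> carrier R \<Longrightarrow> x [^] (k::nat) \<in> P \<Longrightarrow> x \<in> P"
proof (induction k)
  case 0
  then have "\<one> \<in> P" by simp
  then show ?case using ideal.one_imp_carrier[OF primeideal.axioms(1)[OF 0(1)]]
    primeideal.I_notcarr[OF 0(1)] by blast
next
  case (Suc k)
  then have "x [^] k \<otimes> x \<in> P" by simp
  moreover have "x [^] k \<in> carrier R" using Suc by simp
  ultimately have "x [^] k \<in> P \<or> x \<in> P" using primeideal.I_prime[OF Suc(2), of "x [^] k" x] Suc by blast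
  then show ?case using Suc by blast
qed

lemma radical_prime:
  assumes q: "primary_ideal R Q"
  shows "primeideal (radical R Q) R"
proof -
  have Qi: "ideal Q R" and Qne: "Q \<noteq> carrier R"
    and Qp: "\<And>a b. a \<in> carrier R \<Longrightarrow> b \<in> carrier R \<Longrightarrow> a \<otimes> b \<in> Q \<Longrightarrow> a \<in> Q \<or> (\<exists>k::nat. b [^] k \<in> Q)"
    using q unfolding primary_ideal_def by auto
  interpret Q: ideal Q R by (rule Qi)
  have rad: "\<And>x. x \<in> radical R Q \<longleftrightarrow> x \<in> carrier R \<and> (\<exists>k::nat. x [^] k \<in> Q)"
    unfolding radical_def by simp
  have Ri: "ideal (radical R Q) R"
  proof (rule idealI)
    show "ring R" by (rule ring_axioms)
    show "subgroup (radical R Q) (add_monoid R)"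
    proof (rule add.subgroupI, goal_cases)
      case 1 then show ?case unfolding radical_def by auto
    next
      case 2 have "\<zero> [^] (1::nat) \<in> Q" by simp
      then have "\<zero> \<in> radical R Q" unfolding rad by blast
      then show ?case by blast
    next
      case (3 x)
      then obtain k where x: "x \<in> carrier R" "x [^] (k::nat) \<in> Q" unfolding rad by blast
      have "\<ominus> x = (\<ominus> \<one>) \<otimes> x" using x by (simp add: l_minus)
      then have "(\<ominus> x) [^] k = (\<ominus> \<one>) [^] k \<otimes> x [^] k" using x by (simp add: nat_pow_distrib)
      then have "(\<ominus> x) [^] k \<in> Q" using x Q.I_l_closed by simp
      then show ?case using x unfolding rad by auto
    next
      case (4 x y)
      then obtain k l where x: "x \<in> carrier R" "x [^] (k::nat) \<in> Q" "y \<in> carrier R" "y [^] (l::nat) \<in> Q"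
        unfolding rad by blast
      then have "(x \<oplus> y) [^] (k + l) \<in> Q" using pow_sum_in[OF Qi] by blast
      then show ?case using x unfolding rad by auto
    qed
  next
    fix a x assume a: "a \<in> radical R Q" and x: "x \<in> carrier R"
    then obtain k where ak: "a \<in> carrier R" "a [^] (k::nat) \<in> Q" unfolding rad by blast
    have "(x \<otimes> a) [^] k = x [^] k \<otimes> a [^] k" using ak x by (simp add: nat_pow_distrib)
    then have "(x \<otimes> a) [^] k \<in> Q" using ak x Q.I_l_closed by simp
    moreover have "(a \<otimes> x) [^] k = x [^] k \<otimes> a [^] k" using ak x by (simp add: nat_pow_distrib m_comm)
    then have "(a \<otimes> x) [^] k \<in> Q" using ak x Q.I_l_closed by simp
    ultimately show "x \<otimes> a \<in> radical R Q" "a \<otimes> x \<in> radical R Q"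
      using ak x unfolding rad by auto
  qed
  show ?thesis
  proof (rule primeidealI[OF Ri is_cring])
    show "carrier R \<noteq> radical R Q"
    proof
      assume "carrier R = radical R Q"
      then have "\<one> \<in> radical R Q" by (metis one_closed)
      then obtain k where "\<one> [^] (k::nat) \<in> Q" unfolding rad by blast
      then have "\<one> \<in> Q" by simp
      then show False using Q.one_imp_carrier Qne by blast
    qed
  next
    fix a b assume a: "a \<in> carrier R" and b: "b \<in> carrier R" and ab: "a \<otimes> b \<in> radical R Q"
    then obtain k where "(a \<otimes> b) [^] (k::nat) \<in> Q" unfolding rad by blast
    then have "a [^] k \<otimes> b [^] k \<in> Q" using a b by (simp add: nat_pow_distrib)
    then have "a [^] k \<in> Q \<or> (\<exists>m::nat. (b [^] k) [^] m \<in> Q)" using Qp a b by simp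
    then show "a \<in> radical R Q \<or> b \<in> radical R Q"
      using a b unfolding rad by (auto simp: nat_pow_pow)
  qed
qed

lemma exists_u:
  assumes dec: "minimal_primary_decomposition R Qs J" and qQ: "q \<in> Qs"
    and pr: "p = radical R q" and mp: "minimal_prime_of R p J"
  shows "\<exists>u\<in>carrier R - p. \<forall>c\<in>q. u \<otimes> c \<in> J"
proof -
  have fin: "finite Qs" and prim: "\<And>q'. q' \<in> Qs \<Longrightarrow> primary_ideal R q'" and JQ: "\<Inter>Qs = J"
    and inj: "inj_on (radical R) Qs"
    using dec unfolding minimal_primary_decomposition_def by auto
  have idl: "\<And>q'. q' \<in> Qs \<Longrightarrow> ideal q' R" using prim unfolding primary_ideal_def by auto
  have pP: "primeideal p R" and Jp: "J \<subseteq> p"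
    and pmin: "\<And>p'. primeideal p' R \<Longrightarrow> J \<subseteq> p' \<Longrightarrow> p' \<subseteq> p \<Longrightarrow> p' = p"
    using mp unfolding minimal_prime_of_def by auto
  have pc: "p \<subseteq> carrier R" using ideal.Icarr[OF primeideal.axioms(1)[OF pP]] by blast
  have notsub: "\<exists>w\<in>q'. w \<notin> p" if q': "q' \<in> Qs - {q}" for q'
  proof (rule ccontr)
    assume "\<not> (\<exists>w\<in>q'. w \<notin> p)"
    then have sub: "q' \<subseteq> p" by blast
    have "radical R q' \<subseteq> p"
    proof
      fix x assume "x \<in> radical R q'"
      then obtain k where "x \<in> carrier R" "x [^] (k::nat) \<in> q'" unfolding radical_def by blast
      then show "x \<in> p" using pow_in_prime[OF pP] sub by blast
    qed
    moreover have "J \<subseteq> radical R q'"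
    proof
      fix x assume "x \<in> J"
      then have "x \<in> q'" using JQ q' by blast
      moreover have "x \<in> carrier R" using ideal.Icarr[OF idl] q' \<open>x \<in> q'\<close> by blast
      ultimately show "x \<in> radical R q'" unfolding radical_def by (auto intro!: exI[of _ "1::nat"])
    qed
    ultimately have "radical R q' = p" using pmin radical_prime prim q' by blast
    then have "radical R q' = radical R q" using pr by simp
    then have "q' = q" using inj q' qQ unfolding inj_on_def by blast
    then show False using q' by blast
  qed
  have "\<And>F. finite F \<Longrightarrow> F \<subseteq> Qs - {q} \<Longrightarrow> \<exists>u\<in>carrier R - p. \<forall>q'\<in>F. u \<in> q'"
  proof -
    fix F :: "'a set set"
    show "finite F \<Longrightarrow> F \<subseteq> Qs - {q} \<Longrightarrow> \<exists>u\<in>carrier R - p. \<forall>q'\<in>F. u \<in> q'"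
    proof (induction F rule: finite_induct)
      case empty
      have "\<one> \<notin> p" using ideal.one_imp_carrier[OF primeideal.axioms(1)[OF pP]] primeideal.I_notcarr[OF pP] by blast
      then show ?case by auto
    next
      case (insert q' F)
      then obtain u where u: "u \<in> carrier R - p" "\<forall>q''\<in>F. u \<in> q''" by auto
      obtain w where w: "w \<in> q'" "w \<notin> p" using notsub insert by blast
      have q'Q: "q' \<in> Qs" using insert by auto
      have wc: "w \<in> carrier R" using ideal.Icarr[OF idl[OF q'Q]] w by blast
      have "u \<otimes> w \<notin> p" using primeideal.I_prime[OF pP, of u w] u w wc by auto
      moreover have "u \<otimes> w \<in> q'" using ideal.I_l_closed[OF idl[OF q'Q]] w u by auto
      moreover have "\<forall>q''\<in>F. u \<otimes> w \<in> q''"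
      proof
        fix q'' assume "q'' \<in> F"
        then have "q'' \<in> Qs" "u \<in> q''" using insert.prems u by auto
        then show "u \<otimes> w \<in> q''" using ideal.I_r_closed[OF idl[OF \<open>q'' \<in> Qs\<close>]] wc by blast
      qed
      ultimately show ?case using u wc by (intro bexI[of _ "u \<otimes> w"]) auto
    qed
  qed
  then obtain u where u: "u \<in> carrier R - p" "\<forall>q'\<in>Qs - {q}. u \<in> q'" using fin by blast
  have "\<forall>c\<in>q. u \<otimes> c \<in> J"
  proof
    fix c assume c: "c \<in> q"
    have cc: "c \<in> carrier R" using ideal.Icarr[OF idl[OF qQ]] c by blast
    have "u \<otimes> c \<in> q'" if "q' \<in> Qs" for q'
    proof (cases "q' = q")
      case True then show ?thesis using ideal.I_l_closed[OF idl[OF qQ]] c u by auto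
    next
      case False then show ?thesis using ideal.I_r_closed[OF idl[OF that]] u cc that by auto
    qed
    then show "u \<otimes> c \<in> J" using JQ by blast
  qed
  then show ?thesis using u by blast
qed

end

lemma genideal_mono_gen: "S1 \<subseteq> genideal R S2 \<Longrightarrow> genideal R S1 \<subseteq> genideal R S2"
  unfolding genideal_def by blast

lemma genideal_nonring: "\<not> ring R \<Longrightarrow> genideal R S = UNIV"
  unfolding genideal_def using ideal.axioms(2) by blast

locale mainctx = bsetup +
  fixes n gt I u
  assumes mo: "monomial_order n gt" and I_ideal: "ideal I (mpoly_ring R n)"
    and PB_ring: "ring (mpoly_ring (B_ring R p q) n)"
    and u_S: "u \<in> carrier R - p" and u_q: "\<And>c. c \<in> q \<Longrightarrow> u \<otimes> c \<in> contract_const R I"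
begin

abbreviation "PA \<equiv> mpoly_ring R n"
abbreviation "PB \<equiv> mpoly_ring BB n"
abbreviation "\<phi> \<equiv> to_B R p q"
abbreviation "\<Phi> \<equiv> map_coeffs \<phi>"

sublocale B: cring BB by (rule cring_BB)
sublocale PAr: ring PA by (rule ideal.axioms(2)[OF I_ideal])
sublocale PBr: ring PB by (rule PB_ring)
sublocale H: ring_hom_cring R BB \<phi>
  by (intro ring_hom_cring.intro ring_hom_cring_axioms.intro is_cring cring_BB to_B_hom)

lemma I_sub: "I \<subseteq> carrier PA" using ideal.Icarr[OF I_ideal] by blast

lemma phi_zero: "\<phi> \<zero> = \<zero>\<^bsub>BB\<^esub>" by (rule H.hom_zero)

lemma Phi_zero: "\<Phi> \<zero>\<^bsub>PA\<^esub> = \<zero>\<^bsub>PB\<^esub>" by (simp add: map_coeffs_def zero_P phi_zero)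

lemma Phi_neg: "f \<in> carrier PA \<Longrightarrow> \<Phi> (\<ominus>\<^bsub>PA\<^esub> f) = \<ominus>\<^bsub>PB\<^esub> \<Phi> f"
proof -
  assume f: "f \<in> carrier PA"
  have "\<ominus>\<^bsub>PA\<^esub> f = (\<lambda>E. \<ominus> f E)" by (rule neg_P[OF PAr.ring_axioms f])
  moreover have "\<ominus>\<^bsub>PB\<^esub> \<Phi> f = (\<lambda>E. \<ominus>\<^bsub>BB\<^esub> \<Phi> f E)" by (rule B.neg_P[OF PB_ring H.map_carrier[OF f]])
  ultimately show ?thesis using H.map_neg_pt[OF f] by simp
qed

lemma constB: "x \<in> carrier BB \<Longrightarrow> g \<in> carrier PB \<Longrightarrow> mpoly_const BB x \<otimes>\<^bsub>PB\<^esub> g = (\<lambda>E. x \<otimes>\<^bsub>BB\<^esub> g E)"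
  by (rule B.const_mult) (auto simp: carrier_P)

lemma constA: "x \<in> carrier R \<Longrightarrow> g \<in> carrier PA \<Longrightarrow> mpoly_const R x \<otimes>\<^bsub>PA\<^esub> g = (\<lambda>E. x \<otimes> g E)"
  by (rule const_mult) (auto simp: carrier_P)

lemma lift_pts:
  assumes b: "b \<in> carrier PB"
  shows "finite X \<Longrightarrow> \<exists>t\<in>SS. \<forall>E\<in>X. \<exists>a\<in>carrier R. \<phi> t \<otimes>\<^bsub>BB\<^esub> b E = \<phi> a"
proof (induction X rule: finite_induct)
  case empty
  then show ?case using L.one_S by blast
next
  case (insert E X)
  then obtain t where t: "t \<in> SS" "\<forall>F\<in>X. \<exists>a\<in>carrier R. \<phi> t \<otimes>\<^bsub>BB\<^esub> b F = \<phi> a" by blast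
  have bE: "b E \<in> carrier BB" using b by (auto simp: carrier_P)
  obtain a s where as: "a \<in> carrier R" "s \<in> SS" "\<phi> s \<otimes>\<^bsub>BB\<^esub> b E = \<phi> a" using to_B_lift[OF bE] by blast
  have tc: "t \<in> carrier R" "s \<in> carrier R" using t as by auto
  have ts: "t \<otimes> s \<in> SS" using t as S_mult' by blast
  have "\<forall>F\<in>insert E X. \<exists>a\<in>carrier R. \<phi> (t \<otimes> s) \<otimes>\<^bsub>BB\<^esub> b F = \<phi> a"
  proof
    fix F assume F: "F \<in> insert E X"
    have bF: "b F \<in> carrier BB" using b by (auto simp: carrier_P)
    show "\<exists>a\<in>carrier R. \<phi> (t \<otimes> s) \<otimes>\<^bsub>BB\<^esub> b F = \<phi> a"
    proof (cases "F = E")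
      case True
      have "\<phi> (t \<otimes> s) \<otimes>\<^bsub>BB\<^esub> b F = \<phi> t \<otimes>\<^bsub>BB\<^esub> (\<phi> s \<otimes>\<^bsub>BB\<^esub> b E)"
        using True tc bE by (simp add: B.m_assoc)
      also have "\<dots> = \<phi> (t \<otimes> a)" using as tc by simp
      finally show ?thesis using tc as by blast
    next
      case False
      then have "F \<in> X" using F by simp
      then obtain a' where a': "a' \<in> carrier R" "\<phi> t \<otimes>\<^bsub>BB\<^esub> b F = \<phi> a'" using t by blast
      have "\<phi> (t \<otimes> s) \<otimes>\<^bsub>BB\<^esub> b F = \<phi> s \<otimes>\<^bsub>BB\<^esub> (\<phi> t \<otimes>\<^bsub>BB\<^esub> b F)"
        using tc bF by (simp add: B.m_lcomm B.m_comm)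
      also have "\<dots> = \<phi> (s \<otimes> a')" using a' tc by simp
      finally show ?thesis using tc a' by blast
    qed
  qed
  then show ?case using ts by blast
qed

lemma lift_poly:
  assumes b: "b \<in> carrier PB"
  shows "\<exists>c\<in>carrier PA. \<exists>t\<in>SS. mpoly_const BB (\<phi> t) \<otimes>\<^bsub>PB\<^esub> b = \<Phi> c"
proof -
  have fin: "finite {E. b E \<noteq> \<zero>\<^bsub>BB\<^esub>}" using b by (auto simp: carrier_P)
  obtain t where t: "t \<in> SS" "\<forall>E\<in>{E. b E \<noteq> \<zero>\<^bsub>BB\<^esub>}. \<exists>a\<in>carrier R. \<phi> t \<otimes>\<^bsub>BB\<^esub> b E = \<phi> a"
    using lift_pts[OF b fin] by blast
  define c where "c = (\<lambda>E. if b E \<noteq> \<zero>\<^bsub>BB\<^esub> then (SOME a. a \<in> carrier R \<and> \<phi> t \<otimes>\<^bsub>BB\<^esub> b E = \<phi> a) else \<zero>)"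
  have cE: "c E \<in> carrier R \<and> \<phi> t \<otimes>\<^bsub>BB\<^esub> b E = \<phi> (c E)" for E
  proof (cases "b E \<noteq> \<zero>\<^bsub>BB\<^esub>")
    case True
    then have "\<exists>a. a \<in> carrier R \<and> \<phi> t \<otimes>\<^bsub>BB\<^esub> b E = \<phi> a" using t by blast
    from someI_ex[OF this] show ?thesis unfolding c_def using True by simp
  next
    case False
    then show ?thesis unfolding c_def using t by (simp add: phi_zero)
  qed
  have bm: "\<And>E. E \<notin> monoms n \<Longrightarrow> b E = \<zero>\<^bsub>BB\<^esub>" using b by (auto simp: carrier_P)
  have "{E. c E \<noteq> \<zero>} \<subseteq> {E. b E \<noteq> \<zero>\<^bsub>BB\<^esub>}" unfolding c_def by auto
  then have cc: "c \<in> carrier PA" using cE fin finite_subset bm unfolding carrier_P by (auto simp: c_def)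
  have tB: "\<phi> t \<in> carrier BB" using t by simp
  have "mpoly_const BB (\<phi> t) \<otimes>\<^bsub>PB\<^esub> b = (\<lambda>E. \<phi> t \<otimes>\<^bsub>BB\<^esub> b E)" by (rule constB[OF tB b])
  also have "\<dots> = \<Phi> c" using cE by (auto simp: map_coeffs_def)
  finally show ?thesis using cc t by blast
qed


abbreviation "TT \<equiv> {g \<in> carrier PB. \<exists>h\<in>I. \<exists>s\<in>SS. mpoly_const BB (\<phi> s) \<otimes>\<^bsub>PB\<^esub> g = \<Phi> h}"

lemma T_pt: "g \<in> carrier PB \<Longrightarrow> s \<in> SS \<Longrightarrow>
  mpoly_const BB (\<phi> s) \<otimes>\<^bsub>PB\<^esub> g = \<Phi> h \<longleftrightarrow> (\<forall>E. \<phi> s \<otimes>\<^bsub>BB\<^esub> g E = \<phi> (h E))"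
  using constB[of "\<phi> s" g] by (auto simp: fun_eq_iff map_coeffs_def)

lemma T_memI: "g \<in> carrier PB \<Longrightarrow> h \<in> I \<Longrightarrow> s \<in> SS \<Longrightarrow> (\<And>E. \<phi> s \<otimes>\<^bsub>BB\<^esub> g E = \<phi> (h E)) \<Longrightarrow> g \<in> TT"
  using T_pt by blast

lemma T_memD: "g \<in> TT \<Longrightarrow> \<exists>h\<in>I. \<exists>s\<in>SS. (\<forall>E. \<phi> s \<otimes>\<^bsub>BB\<^esub> g E = \<phi> (h E)) \<and>
   mpoly_const BB (\<phi> s) \<otimes>\<^bsub>PB\<^esub> g = \<Phi> h"
  using T_pt by blast

lemma I_zero: "\<zero>\<^bsub>PA\<^esub> \<in> I" by (rule additive_subgroup.zero_closed[OF ideal.axioms(1)[OF I_ideal]])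
lemma I_add: "a \<in> I \<Longrightarrow> b \<in> I \<Longrightarrow> a \<oplus>\<^bsub>PA\<^esub> b \<in> I" by (rule additive_subgroup.a_closed[OF ideal.axioms(1)[OF I_ideal]])
lemma I_neg: "a \<in> I \<Longrightarrow> \<ominus>\<^bsub>PA\<^esub> a \<in> I" by (rule additive_subgroup.a_inv_closed[OF ideal.axioms(1)[OF I_ideal]])
lemma I_lmult: "a \<in> I \<Longrightarrow> x \<in> carrier PA \<Longrightarrow> x \<otimes>\<^bsub>PA\<^esub> a \<in> I" by (rule ideal.I_l_closed[OF I_ideal])
lemma I_rmult: "a \<in> I \<Longrightarrow> x \<in> carrier PA \<Longrightarrow> a \<otimes>\<^bsub>PA\<^esub> x \<in> I" by (rule ideal.I_r_closed[OF I_ideal])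

lemma gcarr: "g \<in> carrier PB \<Longrightarrow> g E \<in> carrier BB" by (auto simp: carrier_P)
lemma fcarr: "f \<in> carrier PA \<Longrightarrow> f E \<in> carrier R" by (auto simp: carrier_P)

lemma T_ideal: "ideal TT PB"
proof (rule idealI)
  show "ring PB" by (rule PB_ring)
  show "subgroup TT (add_monoid PB)"
  proof (rule PBr.add.subgroupI, goal_cases)
    case 1 then show ?case by blast
  next
    case 2
    have "\<zero>\<^bsub>PB\<^esub> \<in> TT"
    proof (rule T_memI[OF PBr.zero_closed I_zero L.one_S])
      fix E show "\<phi> \<one> \<otimes>\<^bsub>BB\<^esub> \<zero>\<^bsub>PB\<^esub> E = \<phi> (\<zero>\<^bsub>PA\<^esub> E)" by (simp add: zero_P phi_zero)
    qed
    then show ?case by blast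
  next
    case (3 g)
    then obtain h s where hs: "h \<in> I" "s \<in> SS" "\<And>E. \<phi> s \<otimes>\<^bsub>BB\<^esub> g E = \<phi> (h E)" using T_memD by blast
    have g: "g \<in> carrier PB" using 3 by blast
    have hc: "h \<in> carrier PA" using hs I_sub by blast
    have sc: "s \<in> carrier R" using hs by blast
    show ?case
    proof (rule T_memI[OF PBr.a_inv_closed[OF g] I_neg[OF hs(1)] hs(2)])
      fix E
      have "\<phi> s \<otimes>\<^bsub>BB\<^esub> (\<ominus>\<^bsub>PB\<^esub> g) E = \<phi> s \<otimes>\<^bsub>BB\<^esub> (\<ominus>\<^bsub>BB\<^esub> g E)"
        using B.neg_P[OF PB_ring g] by simp
      also have "\<dots> = \<ominus>\<^bsub>BB\<^esub> (\<phi> s \<otimes>\<^bsub>BB\<^esub> g E)" using sc gcarr[OF g] by (simp add: B.r_minus)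
      also have "\<dots> = \<phi> (\<ominus> h E)" using hs fcarr[OF hc] by (simp add: H.hom_a_inv)
      also have "\<dots> = \<phi> ((\<ominus>\<^bsub>PA\<^esub> h) E)" using neg_P[OF PAr.ring_axioms hc] by simp
      finally show "\<phi> s \<otimes>\<^bsub>BB\<^esub> (\<ominus>\<^bsub>PB\<^esub> g) E = \<phi> ((\<ominus>\<^bsub>PA\<^esub> h) E)" .
    qed
  next
    case (4 g1 g2)
    then obtain h1 s1 where h1: "h1 \<in> I" "s1 \<in> SS" "\<And>E. \<phi> s1 \<otimes>\<^bsub>BB\<^esub> g1 E = \<phi> (h1 E)" using T_memD by blast
    from 4 obtain h2 s2 where h2: "h2 \<in> I" "s2 \<in> SS" "\<And>E. \<phi> s2 \<otimes>\<^bsub>BB\<^esub> g2 E = \<phi> (h2 E)" using T_memD by blast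
    have g: "g1 \<in> carrier PB" "g2 \<in> carrier PB" using 4 by blast+
    have hc: "h1 \<in> carrier PA" "h2 \<in> carrier PA" using h1 h2 I_sub by blast+
    have sc: "s1 \<in> carrier R" "s2 \<in> carrier R" using h1 h2 by blast+
    let ?h = "mpoly_const R s2 \<otimes>\<^bsub>PA\<^esub> h1 \<oplus>\<^bsub>PA\<^esub> mpoly_const R s1 \<otimes>\<^bsub>PA\<^esub> h2"
    have hI: "?h \<in> I" using I_add I_lmult const_in_P sc h1 h2 by simp
    have hE: "?h E = s2 \<otimes> h1 E \<oplus> s1 \<otimes> h2 E" for E
      using constA[OF sc(2) hc(1)] constA[OF sc(1) hc(2)] by (simp add: add_P)
    show ?case
    proof (rule T_memI[OF PBr.a_closed[OF g] hI S_mult'[OF h1(2) h2(2)]])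
      fix E
      have gE: "g1 E \<in> carrier BB" "g2 E \<in> carrier BB" using gcarr g by auto
      have "\<phi> (s1 \<otimes> s2) \<otimes>\<^bsub>BB\<^esub> (g1 \<oplus>\<^bsub>PB\<^esub> g2) E
          = \<phi> s2 \<otimes>\<^bsub>BB\<^esub> (\<phi> s1 \<otimes>\<^bsub>BB\<^esub> g1 E) \<oplus>\<^bsub>BB\<^esub> \<phi> s1 \<otimes>\<^bsub>BB\<^esub> (\<phi> s2 \<otimes>\<^bsub>BB\<^esub> g2 E)"
        using sc gE by (simp add: add_P B.r_distr B.m_ac)
      also have "\<dots> = \<phi> (?h E)" using h1 h2 hE sc fcarr[OF hc(1)] fcarr[OF hc(2)] by simp
      finally show "\<phi> (s1 \<otimes> s2) \<otimes>\<^bsub>BB\<^esub> (g1 \<oplus>\<^bsub>PB\<^esub> g2) E = \<phi> (?h E)" .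
    qed
  qed
next
  fix g x assume gT: "g \<in> TT" and x: "x \<in> carrier PB"
  obtain h s where hs: "h \<in> I" "s \<in> SS" "\<And>E. \<phi> s \<otimes>\<^bsub>BB\<^esub> g E = \<phi> (h E)"
    and hq: "mpoly_const BB (\<phi> s) \<otimes>\<^bsub>PB\<^esub> g = \<Phi> h" using T_memD[OF gT] by blast
  obtain c t where ct: "c \<in> carrier PA" "t \<in> SS" "mpoly_const BB (\<phi> t) \<otimes>\<^bsub>PB\<^esub> x = \<Phi> c"
    using lift_poly[OF x] by blast
  have g: "g \<in> carrier PB" using gT by blast
  have hc: "h \<in> carrier PA" using hs I_sub by blast
  have sc: "s \<in> carrier R" "t \<in> carrier R" using hs ct by blast+
  have cs: "mpoly_const BB (\<phi> s) \<in> carrier PB" "mpoly_const BB (\<phi> t) \<in> carrier PB"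
    using B.const_in_P sc by auto
  have sg: "mpoly_const BB (\<phi> s) \<otimes>\<^bsub>PB\<^esub> g \<in> carrier PB" "mpoly_const BB (\<phi> t) \<otimes>\<^bsub>PB\<^esub> x \<in> carrier PB"
    using cs g x by auto
  have "\<Phi> (c \<otimes>\<^bsub>PA\<^esub> h) = \<Phi> c \<otimes>\<^bsub>PB\<^esub> \<Phi> h" by (rule H.map_mult[OF ct(1) hc])
  also have "\<dots> = (mpoly_const BB (\<phi> t) \<otimes>\<^bsub>PB\<^esub> x) \<otimes>\<^bsub>PB\<^esub> (mpoly_const BB (\<phi> s) \<otimes>\<^bsub>PB\<^esub> g)"
    using ct hq by simp
  also have "\<dots> = mpoly_const BB (\<phi> t) \<otimes>\<^bsub>PB\<^esub> (x \<otimes>\<^bsub>PB\<^esub> (mpoly_const BB (\<phi> s) \<otimes>\<^bsub>PB\<^esub> g))"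
    using B.const_mult_left_assoc[OF _ x sg(1)] sc by simp
  also have "\<dots> = mpoly_const BB (\<phi> t) \<otimes>\<^bsub>PB\<^esub> (mpoly_const BB (\<phi> s) \<otimes>\<^bsub>PB\<^esub> (x \<otimes>\<^bsub>PB\<^esub> g))"
    using B.const_mult_right_comm[OF _ x g] sc by simp
  also have "\<dots> = (\<lambda>E. \<phi> t \<otimes>\<^bsub>BB\<^esub> (\<phi> s \<otimes>\<^bsub>BB\<^esub> (x \<otimes>\<^bsub>PB\<^esub> g) E))"
    using constB[of "\<phi> s" "x \<otimes>\<^bsub>PB\<^esub> g"] constB[of "\<phi> t" "mpoly_const BB (\<phi> s) \<otimes>\<^bsub>PB\<^esub> (x \<otimes>\<^bsub>PB\<^esub> g)"]
      sc x g cs PBr.m_closed[OF cs(1) PBr.m_closed[OF x g]] by simp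
  finally have e1: "\<Phi> (c \<otimes>\<^bsub>PA\<^esub> h) = (\<lambda>E. \<phi> t \<otimes>\<^bsub>BB\<^esub> (\<phi> s \<otimes>\<^bsub>BB\<^esub> (x \<otimes>\<^bsub>PB\<^esub> g) E))" .
  show "x \<otimes>\<^bsub>PB\<^esub> g \<in> TT"
  proof (rule T_memI[OF PBr.m_closed[OF x g] I_lmult[OF hs(1) ct(1)] S_mult'[OF ct(2) hs(2)]])
    fix E
    have "\<Phi> (c \<otimes>\<^bsub>PA\<^esub> h) E = \<phi> t \<otimes>\<^bsub>BB\<^esub> (\<phi> s \<otimes>\<^bsub>BB\<^esub> (x \<otimes>\<^bsub>PB\<^esub> g) E)"
      using fun_cong[OF e1, of E] by (simp add: map_coeffs_def)
    then show "\<phi> (t \<otimes> s) \<otimes>\<^bsub>BB\<^esub> (x \<otimes>\<^bsub>PB\<^esub> g) E = \<phi> ((c \<otimes>\<^bsub>PA\<^esub> h) E)"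
      using sc gcarr[OF PBr.m_closed[OF x g]] by (simp add: B.m_assoc map_coeffs_def)
  qed
  have "\<Phi> (h \<otimes>\<^bsub>PA\<^esub> c) = \<Phi> h \<otimes>\<^bsub>PB\<^esub> \<Phi> c" by (rule H.map_mult[OF hc ct(1)])
  also have "\<dots> = (mpoly_const BB (\<phi> s) \<otimes>\<^bsub>PB\<^esub> g) \<otimes>\<^bsub>PB\<^esub> (mpoly_const BB (\<phi> t) \<otimes>\<^bsub>PB\<^esub> x)"
    using ct hq by simp
  also have "\<dots> = mpoly_const BB (\<phi> s) \<otimes>\<^bsub>PB\<^esub> (g \<otimes>\<^bsub>PB\<^esub> (mpoly_const BB (\<phi> t) \<otimes>\<^bsub>PB\<^esub> x))"
    using B.const_mult_left_assoc[OF _ g sg(2)] sc by simp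
  also have "\<dots> = mpoly_const BB (\<phi> s) \<otimes>\<^bsub>PB\<^esub> (mpoly_const BB (\<phi> t) \<otimes>\<^bsub>PB\<^esub> (g \<otimes>\<^bsub>PB\<^esub> x))"
    using B.const_mult_right_comm[OF _ g x] sc by simp
  also have "\<dots> = (\<lambda>E. \<phi> s \<otimes>\<^bsub>BB\<^esub> (\<phi> t \<otimes>\<^bsub>BB\<^esub> (g \<otimes>\<^bsub>PB\<^esub> x) E))"
    using constB[of "\<phi> t" "g \<otimes>\<^bsub>PB\<^esub> x"] constB[of "\<phi> s" "mpoly_const BB (\<phi> t) \<otimes>\<^bsub>PB\<^esub> (g \<otimes>\<^bsub>PB\<^esub> x)"]
      sc x g cs PBr.m_closed[OF cs(2) PBr.m_closed[OF g x]] by simp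
  finally have e2: "\<Phi> (h \<otimes>\<^bsub>PA\<^esub> c) = (\<lambda>E. \<phi> s \<otimes>\<^bsub>BB\<^esub> (\<phi> t \<otimes>\<^bsub>BB\<^esub> (g \<otimes>\<^bsub>PB\<^esub> x) E))" .
  show "g \<otimes>\<^bsub>PB\<^esub> x \<in> TT"
  proof (rule T_memI[OF PBr.m_closed[OF g x] I_rmult[OF hs(1) ct(1)] S_mult'[OF hs(2) ct(2)]])
    fix E
    have "\<Phi> (h \<otimes>\<^bsub>PA\<^esub> c) E = \<phi> s \<otimes>\<^bsub>BB\<^esub> (\<phi> t \<otimes>\<^bsub>BB\<^esub> (g \<otimes>\<^bsub>PB\<^esub> x) E)"
      using fun_cong[OF e2, of E] by (simp add: map_coeffs_def)
    then show "\<phi> (s \<otimes> t) \<otimes>\<^bsub>BB\<^esub> (g \<otimes>\<^bsub>PB\<^esub> x) E = \<phi> ((h \<otimes>\<^bsub>PA\<^esub> c) E)"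
      using sc gcarr[OF PBr.m_closed[OF g x]] by (simp add: B.m_assoc map_coeffs_def)
  qed
qed

lemma PhiI_sub: "\<Phi> ` I \<subseteq> carrier PB" using H.map_carrier I_sub by blast

lemma gen_sub_T: "genideal PB (\<Phi> ` I) \<subseteq> TT"
proof (rule PBr.genideal_minimal[OF T_ideal])
  show "\<Phi> ` I \<subseteq> TT"
  proof
    fix g assume "g \<in> \<Phi> ` I"
    then obtain h where h: "h \<in> I" "g = \<Phi> h" by blast
    have hc: "h \<in> carrier PA" using h I_sub by blast
    show "g \<in> TT"
    proof (rule T_memI[OF _ h(1) L.one_S])
      show "g \<in> carrier PB" using h H.map_carrier[OF hc] by simp
      fix E show "\<phi> \<one> \<otimes>\<^bsub>BB\<^esub> g E = \<phi> (h E)" using h fcarr[OF hc] by (simp add: map_coeffs_def)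
    qed
  qed
qed


abbreviation "INA \<equiv> {init_term R gt f | f. f \<in> I \<and> f \<noteq> \<zero>\<^bsub>PA\<^esub>}"
abbreviation "GA \<equiv> genideal PA INA"
abbreviation "LHS \<equiv> genideal PB (\<Phi> ` GA)"
abbreviation "GB \<equiv> genideal PB (\<Phi> ` I)"
abbreviation "INB \<equiv> {init_term BB gt g | g. g \<in> GB \<and> g \<noteq> \<zero>\<^bsub>PB\<^esub>}"
abbreviation "RHS \<equiv> genideal PB INB"

lemma INA_sub: "INA \<subseteq> carrier PA"
  using init_term_carrier[OF mo _ _ zero_closed] I_sub by blast

lemma GA_ideal: "ideal GA PA" by (rule PAr.genideal_ideal[OF INA_sub])
lemma GA_sub: "GA \<subseteq> carrier PA" using ideal.Icarr[OF GA_ideal] by blast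
lemma PhiGA_sub: "\<Phi> ` GA \<subseteq> carrier PB" using GA_sub H.map_carrier by blast
lemma LHS_ideal: "ideal LHS PB" by (rule PBr.genideal_ideal[OF PhiGA_sub])
lemma GB_ideal: "ideal GB PB" by (rule PBr.genideal_ideal[OF PhiI_sub])
lemma GB_sub: "GB \<subseteq> carrier PB" using ideal.Icarr[OF GB_ideal] by blast
lemma INB_sub: "INB \<subseteq> carrier PB"
  using init_term_carrier[OF mo _ _ B.zero_closed] GB_sub by blast
lemma RHS_ideal: "ideal RHS PB" by (rule PBr.genideal_ideal[OF INB_sub])

lemma mmono_carrier: "E \<in> monoms n \<Longrightarrow> mmono R \<one> E \<in> carrier PA"
proof -
  assume E: "E \<in> monoms n"
  have "{F. mmono R \<one> E F \<noteq> \<zero>} \<subseteq> {E}" by (auto simp: mmono_def)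
  then show ?thesis using E finite_subset by (auto simp: carrier_P mmono_def)
qed

lemma poly_in_I:
  "finite X \<Longrightarrow> X \<subseteq> monoms n \<Longrightarrow> (\<forall>E\<in>X. k E \<in> contract_const R I) \<Longrightarrow> (\<lambda>F. if F \<in> X then k F else \<zero>) \<in> I"
proof (induction X rule: finite_induct)
  case empty
  then show ?case using I_zero by (simp add: zero_P)
next
  case (insert E X)
  have kE: "k E \<in> carrier R" "mpoly_const R (k E) \<in> I" using insert.prems unfolding contract_const_def by auto
  have kc: "\<And>F. F \<in> X \<Longrightarrow> k F \<in> carrier R" using insert.prems unfolding contract_const_def by auto
  have mm: "mmono R \<one> E \<in> carrier PA" using mmono_carrier insert.prems by blast
  have IH: "(\<lambda>F. if F \<in> X then k F else \<zero>) \<in> I" using insert.IH insert.prems by blast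
  have pr: "mpoly_const R (k E) \<otimes>\<^bsub>PA\<^esub> mmono R \<one> E = (\<lambda>F. k E \<otimes> mmono R \<one> E F)"
    by (rule constA[OF kE(1) mm])
  have "(\<lambda>F. if F \<in> insert E X then k F else \<zero>) =
     (\<lambda>F. if F \<in> X then k F else \<zero>) \<oplus>\<^bsub>PA\<^esub> (mpoly_const R (k E) \<otimes>\<^bsub>PA\<^esub> mmono R \<one> E)"
    unfolding pr add_P using insert.hyps kE kc by (intro ext) (auto simp: mmono_def)
  moreover have "(\<lambda>F. if F \<in> X then k F else \<zero>) \<oplus>\<^bsub>PA\<^esub> (mpoly_const R (k E) \<otimes>\<^bsub>PA\<^esub> mmono R \<one> E) \<in> I"
    by (rule I_add[OF IH I_rmult[OF kE(2) mm]])
  ultimately show ?case by simp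
qed

lemma key:
  assumes gG: "g \<in> GB" and gnz: "g \<noteq> \<zero>\<^bsub>PB\<^esub>"
  shows "init_term BB gt g \<in> LHS"
proof -
  have gT: "g \<in> TT" using gen_sub_T gG by blast
  obtain h s where hs: "h \<in> I" "s \<in> SS" "\<And>E. \<phi> s \<otimes>\<^bsub>BB\<^esub> g E = \<phi> (h E)" using T_memD[OF gT] by blast
  have gc: "g \<in> carrier PB" using gT by blast
  have hc: "h \<in> carrier PA" using hs I_sub by blast
  have sc: "s \<in> carrier R" using hs by blast
  have uc: "u \<in> carrier R" using u_S by blast
  define X where "X = {E. h E \<noteq> \<zero> \<and> h E \<in> q}"
  have Xf: "finite X" using hc unfolding X_def carrier_P by (auto intro: finite_subset)
  have Xm: "X \<subseteq> monoms n" using hc unfolding X_def carrier_P by auto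
  define hq where "hq = (\<lambda>F. if F \<in> X then u \<otimes> h F else \<zero>)"
  have hqI: "hq \<in> I" unfolding hq_def
    by (rule poly_in_I[OF Xf Xm]) (auto simp: X_def u_q)
  have hqc: "hq \<in> carrier PA" using hqI I_sub by blast
  define h' where "h' = mpoly_const R u \<otimes>\<^bsub>PA\<^esub> h \<oplus>\<^bsub>PA\<^esub> \<ominus>\<^bsub>PA\<^esub> hq"
  have h'I: "h' \<in> I" unfolding h'_def by (rule I_add[OF I_lmult[OF hs(1) const_in_P[OF uc]] I_neg[OF hqI]])
  have h'c: "h' \<in> carrier PA" using h'I I_sub by blast
  have h'E: "h' E = (if h E \<in> q then \<zero> else u \<otimes> h E)" for E
  proof -
    have hE: "h E \<in> carrier R" using fcarr[OF hc] .
    have "h' E = u \<otimes> h E \<oplus> \<ominus> hq E"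
      unfolding h'_def using constA[OF uc hc] neg_P[OF PAr.ring_axioms hqc] by (simp add: add_P)
    then show ?thesis using hE uc by (auto simp: hq_def X_def r_neg)
  qed
  have suppA: "(h' E \<noteq> \<zero>) = (h E \<notin> q)" for E
  proof (cases "h E \<in> q")
    case True then show ?thesis using h'E by simp
  next
    case False
    have hE: "h E \<in> carrier R" using fcarr[OF hc] .
    have "u \<otimes> h E \<noteq> \<zero>"
    proof
      assume "u \<otimes> h E = \<zero>"
      then have "h E \<otimes> u \<in> q" using hE uc m_comm additive_subgroup.zero_closed[OF ideal.axioms(1)[OF q_ideal]] by simp
      then show False using q_cancel[OF hE u_S] False by blast
    qed
    then show ?thesis using h'E False by simp
  qed
  obtain v where v: "v \<in> carrier BB" "v \<otimes>\<^bsub>BB\<^esub> \<phi> s = \<one>\<^bsub>BB\<^esub>" using to_B_unit[OF hs(2)] by blast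
  have suppB: "(g E \<noteq> \<zero>\<^bsub>BB\<^esub>) = (h E \<notin> q)" for E
  proof -
    have hE: "h E \<in> carrier R" using fcarr[OF hc] .
    have gE: "g E \<in> carrier BB" using gcarr[OF gc] .
    have z: "\<phi> (h E) = \<zero>\<^bsub>BB\<^esub> \<longleftrightarrow> h E \<in> q" using to_B_zero_iff[OF hE] .
    have "g E = v \<otimes>\<^bsub>BB\<^esub> (\<phi> s \<otimes>\<^bsub>BB\<^esub> g E)" using v gE sc by (simp add: B.m_assoc[symmetric])
    also have "\<dots> = v \<otimes>\<^bsub>BB\<^esub> \<phi> (h E)" using hs by simp
    finally have ge: "g E = v \<otimes>\<^bsub>BB\<^esub> \<phi> (h E)" .
    show ?thesis
    proof
      assume "g E \<noteq> \<zero>\<^bsub>BB\<^esub>"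
      then have "\<phi> (h E) \<noteq> \<zero>\<^bsub>BB\<^esub>" using ge v by auto
      then show "h E \<notin> q" using z by blast
    next
      assume "h E \<notin> q"
      then have "\<phi> (h E) \<noteq> \<zero>\<^bsub>BB\<^esub>" using z by blast
      then show "g E \<noteq> \<zero>\<^bsub>BB\<^esub>" using hs(3)[of E] sc by auto
    qed
  qed
  have supp: "(g E \<noteq> \<zero>\<^bsub>BB\<^esub>) = (h' E \<noteq> \<zero>)" for E using suppA suppB by simp
  have LM: "lead_monom BB gt g = lead_monom R gt h'" by (rule lm_supp_eq) (use supp in simp)
  have "\<exists>E. g E \<noteq> \<zero>\<^bsub>BB\<^esub>"
  proof (rule ccontr)
    assume "\<not> (\<exists>E. g E \<noteq> \<zero>\<^bsub>BB\<^esub>)"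
    then have "g = (\<lambda>E. \<zero>\<^bsub>BB\<^esub>)" by (intro ext) auto
    then show False using gnz by (simp add: zero_P)
  qed
  then obtain E0 where "g E0 \<noteq> \<zero>\<^bsub>BB\<^esub>" by blast
  then have h'nz: "h' \<noteq> \<zero>\<^bsub>PA\<^esub>" using supp by (auto simp: zero_P)
  define M where "M = lead_monom R gt h'"
  have gM: "g M \<noteq> \<zero>\<^bsub>BB\<^esub>" using lm_prop(1)[OF mo gc gnz] LM M_def by simp
  then have hM: "h M \<notin> q" using suppB by blast
  have inA: "init_term R gt h' \<in> GA"
    using PAr.genideal_self[OF INA_sub] h'I h'nz by blast
  have inc: "init_term R gt h' \<in> carrier PA" using inA GA_sub by blast
  have PhiIn: "\<Phi> (init_term R gt h') \<in> LHS" using PBr.genideal_self[OF PhiGA_sub] inA by blast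
  have usS: "u \<otimes> s \<in> SS" using S_mult'[OF u_S hs(2)] .
  obtain v' where v': "v' \<in> carrier BB" "v' \<otimes>\<^bsub>BB\<^esub> \<phi> (u \<otimes> s) = \<one>\<^bsub>BB\<^esub>" using to_B_unit[OF usS] by blast
  have eq: "init_term BB gt g = mpoly_const BB v' \<otimes>\<^bsub>PB\<^esub> \<Phi> (init_term R gt h')"
  proof -
    have r: "mpoly_const BB v' \<otimes>\<^bsub>PB\<^esub> \<Phi> (init_term R gt h') = (\<lambda>F. v' \<otimes>\<^bsub>BB\<^esub> \<Phi> (init_term R gt h') F)"
      by (rule constB[OF v'(1) H.map_carrier[OF inc]])
    have "init_term BB gt g F = v' \<otimes>\<^bsub>BB\<^esub> \<Phi> (init_term R gt h') F" for F
    proof (cases "F = M")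
      case True
      have hMc: "h M \<in> carrier R" using fcarr[OF hc] .
      have gMc: "g M \<in> carrier BB" using gcarr[OF gc] .
      have "v' \<otimes>\<^bsub>BB\<^esub> \<Phi> (init_term R gt h') M = v' \<otimes>\<^bsub>BB\<^esub> \<phi> (u \<otimes> h M)"
        using h'E[of M] hM by (simp add: map_coeffs_def init_term_def M_def)
      also have "\<dots> = v' \<otimes>\<^bsub>BB\<^esub> (\<phi> u \<otimes>\<^bsub>BB\<^esub> (\<phi> s \<otimes>\<^bsub>BB\<^esub> g M))" using hs(3)[of M] uc hMc by simp
      also have "\<dots> = (v' \<otimes>\<^bsub>BB\<^esub> (\<phi> u \<otimes>\<^bsub>BB\<^esub> \<phi> s)) \<otimes>\<^bsub>BB\<^esub> g M" using v'(1) uc sc gMc by (simp add: B.m_assoc)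
      also have "v' \<otimes>\<^bsub>BB\<^esub> (\<phi> u \<otimes>\<^bsub>BB\<^esub> \<phi> s) = \<one>\<^bsub>BB\<^esub>" using v'(2) uc sc by simp
      also have "\<one>\<^bsub>BB\<^esub> \<otimes>\<^bsub>BB\<^esub> g M = g M" using gMc by simp
      finally show ?thesis using True LM by (simp add: init_term_def M_def)
    next
      case False
      then show ?thesis using LM v' by (simp add: init_term_def M_def map_coeffs_def phi_zero)
    qed
    then show ?thesis using r by auto
  qed
  show ?thesis unfolding eq
    by (rule ideal.I_l_closed[OF LHS_ideal PhiIn B.const_in_P[OF v'(1)]])
qed

lemma sub1: "\<Phi> ` GA \<subseteq> RHS"
proof -
  let ?V = "{f \<in> carrier PA. \<Phi> f \<in> RHS}"
  interpret RI: ideal RHS PB by (rule RHS_ideal)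
  have V: "ideal ?V PA"
  proof (rule idealI)
    show "ring PA" by (rule PAr.ring_axioms)
    show "subgroup ?V (add_monoid PA)"
    proof (rule PAr.add.subgroupI, goal_cases)
      case 1 then show ?case by blast
    next
      case 2
      have "\<zero>\<^bsub>PA\<^esub> \<in> ?V" using Phi_zero RI.zero_closed by simp
      then show ?case by blast
    next
      case (3 f)
      then have "\<Phi> (\<ominus>\<^bsub>PA\<^esub> f) \<in> RHS" using Phi_neg RI.a_inv_closed by simp
      then show ?case using 3 by simp
    next
      case (4 f g)
      then have "\<Phi> (f \<oplus>\<^bsub>PA\<^esub> g) \<in> RHS" using H.map_add RI.a_closed by simp
      then show ?case using 4 by simp
    qed
  next
    fix f x assume f: "f \<in> ?V" and x: "x \<in> carrier PA"
    have "\<Phi> (x \<otimes>\<^bsub>PA\<^esub> f) \<in> RHS" using f x H.map_mult RI.I_l_closed H.map_carrier by simp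
    moreover have "\<Phi> (f \<otimes>\<^bsub>PA\<^esub> x) \<in> RHS" using f x H.map_mult RI.I_r_closed H.map_carrier by simp
    ultimately show "x \<otimes>\<^bsub>PA\<^esub> f \<in> ?V" "f \<otimes>\<^bsub>PA\<^esub> x \<in> ?V" using f x by auto
  qed
  have "INA \<subseteq> ?V"
  proof
    fix x assume "x \<in> INA"
    then obtain f where f: "x = init_term R gt f" "f \<in> I" "f \<noteq> \<zero>\<^bsub>PA\<^esub>" by blast
    have fc: "f \<in> carrier PA" using f I_sub by blast
    have xc: "x \<in> carrier PA" using INA_sub \<open>x \<in> INA\<close> by blast
    define M where "M = lead_monom R gt f"
    have fM: "f M \<noteq> \<zero>" and mx: "\<And>F. f F \<noteq> \<zero> \<Longrightarrow> F \<noteq> M \<Longrightarrow> gt M F"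
      using lm_prop[OF mo fc f(3)] unfolding M_def by auto
    have "\<Phi> x \<in> RHS"
    proof (cases "\<phi> (f M) = \<zero>\<^bsub>BB\<^esub>")
      case True
      have "\<Phi> x = \<zero>\<^bsub>PB\<^esub>" using True
        by (intro ext) (auto simp: f(1) map_coeffs_def init_term_def zero_P phi_zero M_def[symmetric])
      then show ?thesis using RI.zero_closed by simp
    next
      case False
      have Pf: "\<Phi> f \<in> carrier PB" using H.map_carrier[OF fc] .
      have PfG: "\<Phi> f \<in> GB" using PBr.genideal_self[OF PhiI_sub] f(2) by blast
      have Pfnz: "\<Phi> f \<noteq> \<zero>\<^bsub>PB\<^esub>"
      proof
        assume "\<Phi> f = \<zero>\<^bsub>PB\<^esub>"
        then have "\<Phi> f M = \<zero>\<^bsub>BB\<^esub>" by (simp add: zero_P)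
        then show False using False by (simp add: map_coeffs_def)
      qed
      have LM: "lead_monom BB gt (\<Phi> f) = M"
      proof (rule lm_unique[OF mo])
        show "\<And>E. \<Phi> f E \<noteq> \<zero>\<^bsub>BB\<^esub> \<Longrightarrow> E \<in> monoms n" using Pf by (auto simp: carrier_P)
        show "\<Phi> f M \<noteq> \<zero>\<^bsub>BB\<^esub>" using False by (simp add: map_coeffs_def)
        fix F assume F: "\<Phi> f F \<noteq> \<zero>\<^bsub>BB\<^esub>" "F \<noteq> M"
        have "f F \<noteq> \<zero>"
        proof
          assume "f F = \<zero>"
          then have "\<Phi> f F = \<zero>\<^bsub>BB\<^esub>" by (simp add: map_coeffs_def phi_zero)
          then show False using F(1) by contradiction
        qed
        then show "gt M F" using mx F(2) by blast
      qed
      have "\<Phi> x = init_term BB gt (\<Phi> f)"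
      proof (rule ext)
        fix F show "\<Phi> x F = init_term BB gt (\<Phi> f) F"
        proof (cases "F = M")
          case True then show ?thesis using LM by (simp add: f(1) map_coeffs_def init_term_def M_def)
        next
          case False then show ?thesis using LM by (simp add: f(1) map_coeffs_def init_term_def M_def phi_zero)
        qed
      qed
      then have "\<Phi> x \<in> INB" using PfG Pfnz by blast
      then show ?thesis using PBr.genideal_self[OF INB_sub] by blast
    qed
    then show "x \<in> ?V" using xc by blast
  qed
  then have "GA \<subseteq> ?V" by (rule PAr.genideal_minimal[OF V])
  then show ?thesis by blast
qed

lemma main_eq: "LHS = RHS"
proof
  show "LHS \<subseteq> RHS" by (rule genideal_mono_gen[OF sub1])
  show "RHS \<subseteq> LHS"
  proof (rule genideal_mono_gen)
    show "INB \<subseteq> LHS" using key by blast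
  qed
qed

end

theorem proposition3p10:
  fixes A :: "('a, 'm) ring_scheme" and n :: nat
    and gt :: "(nat \<Rightarrow> nat) \<Rightarrow> (nat \<Rightarrow> nat) \<Rightarrow> bool"
    and I :: "((nat \<Rightarrow> nat) \<Rightarrow> 'a) set" and q p :: "'a set"
  assumes "cring A" and "noetherian_ring A"
    and "monomial_order n gt"
    and "ideal I (mpoly_ring A n)"
    and "isolated_primary_component A (contract_const A I) q p"
  shows "ext_to_Bx A n p q (init_ideal A n gt I)
         = init_ideal (B_ring A p q) n gt (ext_to_Bx A n p q I)"
proof (cases "ring (mpoly_ring (B_ring A p q) n)")
  case False
  show ?thesis unfolding ext_to_Bx_def init_ideal_def genideal_nonring[OF False] ..
next
  case True
  obtain Qs where dec: "minimal_primary_decomposition A Qs (contract_const A I)" "q \<in> Qs"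
    and prad: "p = radical A q" and mp: "minimal_prime_of A p (contract_const A I)"
    using assms(5) unfolding isolated_primary_component_def by blast
  have qprim: "primary_ideal A q" using dec unfolding minimal_primary_decomposition_def by blast
  have pprime: "primeideal p A" using mp unfolding minimal_prime_of_def by blast
  interpret A: cring A by (rule assms(1))
  obtain u where u: "u \<in> carrier A - p" "\<forall>c\<in>q. u \<otimes>\<^bsub>A\<^esub> c \<in> contract_const A I"
    using A.exists_u[OF dec(1) dec(2) prad mp] by blast
  have bs: "bsetup A p q"
    by (rule bsetup.intro[OF assms(1)], rule bsetup_axioms.intro) (use pprime qprim prad in auto)
  have mc: "mainctx A p q n gt I u"
    by (rule mainctx.intro[OF bs], rule mainctx_axioms.intro) (use assms(3) assms(4) True u in auto)
  interpret M: mainctx A p q n gt I u by (rule mc)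
  show ?thesis unfolding ext_to_Bx_def init_ideal_def using M.main_eq by simp
qed

end
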